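(* Let $G_0^*$ be a $(k,r_0)$-regular hypergraph with vertices $v_1,\dots,v_n$, and list the eigenvalues of $S(G_0^* )$ with multiplicity as $\mu_1^{(0)}=n-1-2r_0(k-1),\mu_2^{(0)},\dots,\mu_n^{(0)}$. For $j=1,\dots,n$ let $G_j^*$ be a $(k,r)$-regular hypergraph on $m\ge2$ vertices, and list the eigenvalues of $S(G_j^* )$ with multiplicity as $\mu_1^{(j)}=m-1-2r(k-1),\mu_2^{(j)},\dots,\mu_m^{(j)}$. Let $G^*=G_0^*\odot_1^n G_i^*$ be the generalized corona with $p=1$, $t=n$ and $U_i=\{v_i\}$. Put $b=\binom{m-1}{k-2}$, $c=\binom{m-1}{k-2}-\binom{m-2}{k-2}$ and $h=h(\mu)=-(1+2r(k-1)+2c(m-1)+\mu)$. Then for every real $\mu$, $$P_{S(G^* )}(\mu)=\Big((\mu_1^{(0)}-\mu)(h+mn)+4bm(n-b)-mn^2\Big)\prod_{i=2}^n\Big(\mu_i^{(0)}h-4mb^2-\mu h\Big)\prod_{j=1}^n\prod_{i=2}^m\Big(\mu_i^{(j)}+2c-\mu\Big).$$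
   Context: All hypergraphs are finite and simple: a hypergraph $G^*=(V,E)$ consists of a finite vertex set $V$ and a set $E$ of subsets of $V$ (hyperedges), each of size at least $2$. It is $k$-uniform if every hyperedge has exactly $k$ elements, and $(k,r)$-regular if it is $k$-uniform and every vertex lies in exactly $r$ hyperedges. For a hypergraph with vertices $v_1,\dots,v_n$, the adjacency matrix $A(G^* )$ is the $n\times n$ matrix whose $(i,j)$ entry, for $i\ne j$, is the number of hyperedges containing both $v_i$ and $v_j$, and whose diagonal entries are $0$; the Seidel matrix is $S(G^* )=J_n-I_n-2A(G^* )$, where $J_n$ is the all-ones matrix and $I_n$ the identity. For a square matrix $M$, $P_M(\mu)=\det(M-\mu I)$. Binomial coefficients $\binom{x}{y}$ with integers $x\ge 0$ and $y$ are $0$ when $y<0$ or $y>x$. Generalized corona: let $G_0^*$ be a $k$-uniform hypergraph with vertex set $V_0$, $\{U_1,\dots,U_t\}$ a partition of $V_0$ with $|U_i|=p$, and $G_1^*,\dots,G_t^*$ $k$-uniform hypergraphs. The generalized corona $G_0^*\odot_p^t G_i^*$ is the $k$-uniform hypergraph obtained as follows: for each $i$ take $p$ copies $G_i^{*(1)},\dots,G_i^{*(p)}$ of $G_i^*$, all copies pairwise vertex-disjoint and disjoint from $V_0$. The vertex set is $V_0$ together with the vertices of all copies; the hyperedges are the hyperedges of $G_0^*$, the hyperedges of every copy, and, for every $i\in\{1,\dots,t\}$ and $j\in\{1,\dots,p\}$, every $k$-element subset of $U_i\cup V(G_i^{*(j)})$ that meets both $U_i$ and $V(G_i^{*(j)})$.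 *)

theory Defs
  imports "Jordan_Normal_Form.Determinant"
begin

definition hypergraph :: "'a set \<Rightarrow> 'a set set \<Rightarrow> bool" where
  "hypergraph V E \<longleftrightarrow> finite V \<and> (\<forall>e\<in>E. e \<subseteq> V \<and> card e \<ge> 2)"

definition k_uniform :: "nat \<Rightarrow> 'a set \<Rightarrow> 'a set set \<Rightarrow> bool" where
  "k_uniform k V E \<longleftrightarrow> hypergraph V E \<and> (\<forall>e\<in>E. card e = k)"

definition kr_regular :: "nat \<Rightarrow> nat \<Rightarrow> 'a set \<Rightarrow> 'a set set \<Rightarrow> bool" where
  "kr_regular k r V E \<longleftrightarrow> k_uniform k V E \<and> (\<forall>v\<in>V. card {e\<in>E. v \<in> e} = r)"

definition adj_mat :: "'a set set \<Rightarrow> 'a list \<Rightarrow> real mat" where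
  "adj_mat E vs = mat (length vs) (length vs)
     (\<lambda>(i,j). if i = j then 0 else real (card {e\<in>E. vs!i \<in> e \<and> vs!j \<in> e}))"

definition seidel_mat :: "'a set set \<Rightarrow> 'a list \<Rightarrow> real mat" where
  "seidel_mat E vs = mat (length vs) (length vs) (\<lambda>_. 1) - 1\<^sub>m (length vs)
     - 2 \<cdot>\<^sub>m adj_mat E vs"

definition charP :: "real mat \<Rightarrow> real \<Rightarrow> real" where
  "charP M \<mu> = det (M - \<mu> \<cdot>\<^sub>m 1\<^sub>m (dim_row M))"

text \<open>Generalized corona G0 (.)_p^t G_i: parts U i (i=1..t), copies (i,j), j=1..p,
  the copy (i,j) of G_i has vertices Inr (i,j,x) for x in VG i.\<close>
definition corona_copy :: "nat \<Rightarrow> nat \<Rightarrow> 'b set \<Rightarrow> ('a + nat \<times> nat \<times> 'b) set" where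
  "corona_copy i j W = (\<lambda>x. Inr (i,j,x)) ` W"

definition gen_corona_V ::
  "'a set \<Rightarrow> nat \<Rightarrow> nat \<Rightarrow> (nat \<Rightarrow> 'b set) \<Rightarrow> ('a + nat \<times> nat \<times> 'b) set" where
  "gen_corona_V V0 t p VG = Inl ` V0 \<union> (\<Union>i\<in>{1..t}. \<Union>j\<in>{1..p}. corona_copy i j (VG i))"

definition gen_corona_E ::
  "nat \<Rightarrow> 'a set set \<Rightarrow> nat \<Rightarrow> nat \<Rightarrow> (nat \<Rightarrow> 'a set) \<Rightarrow> (nat \<Rightarrow> 'b set)
     \<Rightarrow> (nat \<Rightarrow> 'b set set) \<Rightarrow> ('a + nat \<times> nat \<times> 'b) set set" where
  "gen_corona_E k E0 t p U VG EG =
     (image Inl) ` E0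
   \<union> (\<Union>i\<in>{1..t}. \<Union>j\<in>{1..p}. (image (\<lambda>x. Inr (i,j,x))) ` EG i)
   \<union> (\<Union>i\<in>{1..t}. \<Union>j\<in>{1..p}.
        {e. e \<subseteq> Inl ` U i \<union> corona_copy i j (VG i) \<and> card e = k
            \<and> e \<inter> Inl ` U i \<noteq> {} \<and> e \<inter> corona_copy i j (VG i) \<noteq> {}})"

end

theory Submission
  imports Defs
begin


lemma mult_mat_idx:
  "i < a \<Longrightarrow> j < c \<Longrightarrow> (mat a b f * mat b c g) $$ (i,j) = (\<Sum>k<b. f (i,k) * g (k,j))"
  by (simp add: scalar_prod_def lessThan_atLeast0 row_def col_def)

lemma det_lower_one:
  assumes "\<And>i j. i < j \<Longrightarrow> j < N \<Longrightarrow> f (i,j) = 0" "\<And>i. i < N \<Longrightarrow> f (i,i) = (1::real)"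
  shows "det (mat N N f) = 1"
proof -
  have "det (mat N N f) = prod_list (diag_mat (mat N N f))"
    by (rule det_lower_triangular[of N]) (use assms in auto)
  also have "diag_mat (mat N N f) = map (\<lambda>_. 1) [0..<N]"
    using assms(2) by (simp add: diag_mat_def)
  also have "prod_list (map (\<lambda>_. 1::real) [0..<N]) = 1"
    by (induct N) auto
  finally show ?thesis .
qed

lemma det_IJ: "det (mat N N (\<lambda>(i,j). (if i = j then 1 else 0) + (s::real))) = 1 + s * real N"
proof (cases "N = 0")
  case True then show ?thesis by simp
next
  case False
  define Q where "Q = mat N N (\<lambda>(i,j). (if j = i then 1 else 0) - (if i = j + 1 then 1 else (0::real)))"
  define R where "R = mat N N (\<lambda>(i,j). if j \<le> i then 1 else (0::real))"
  define IJ where "IJ = mat N N (\<lambda>(i,j). (if i = j then 1 else 0) + (s::real))"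
  define K where "K = mat N N (\<lambda>(i,j). if i = 0 then (if j = 0 then 1 else 0) + s
        else (if j = i then 1 else 0) - (if i = j + 1 then 1 else (0::real)))"
  define M where "M = mat N N (\<lambda>(i,j). if i = 0 then (if j = 0 then 1 + s * real N else s * real (N - j))
        else (if i = j then 1 else (0::real)))"
  have dQ: "det Q = 1" unfolding Q_def by (rule det_lower_one) auto
  have dR: "det R = 1" unfolding R_def by (rule det_lower_one) auto
  have QIJ: "Q * IJ = K"
  proof (rule eq_matI)
    fix i j assume ij: "i < dim_row K" "j < dim_col K"
    hence ij': "i < N" "j < N" by (auto simp: K_def)
    have "(Q * IJ) $$ (i,j) = (\<Sum>k<N. ((if k = i then 1 else 0) - (if i = k + 1 then 1 else 0))
             * ((if k = j then 1 else 0) + s))"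
      unfolding Q_def IJ_def using ij' by (subst mult_mat_idx) auto
    also have "\<dots> = (\<Sum>k<N. (if k = i then (if k = j then 1 else 0) + s else 0)
       - (if i = k + 1 then (if k = j then 1 else 0) + s else 0))"
      by (intro sum.cong) auto
    also have "\<dots> = (\<Sum>k<N. (if k = i then (if k = j then 1 else 0) + s else 0))
       - (\<Sum>k<N. (if i = k + 1 then (if k = j then 1 else 0) + s else 0))"
      by (rule sum_subtractf)
    also have "(\<Sum>k<N. (if k = i then (if k = j then 1 else 0) + s else 0)) = (if i = j then 1 else 0) + s"
      using ij' by (simp add: sum.delta)
    also have "(\<Sum>k<N. (if i = k + 1 then (if k = j then 1 else 0) + s else 0))
        = (if i = 0 then 0 else (if i - 1 = j then 1 else 0) + s)"
    proof (cases i)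
      case 0 then show ?thesis by simp
    next
      case (Suc i')
      have "(\<Sum>k<N. (if i = k + 1 then (if k = j then 1 else 0) + s else 0))
         = (\<Sum>k<N. (if k = i' then (if k = j then 1 else 0) + s else 0))"
        using Suc by (intro sum.cong) auto
      also have "\<dots> = (if i' = j then 1 else 0) + s" using Suc ij' by (simp add: sum.delta)
      finally show ?thesis using Suc by simp
    qed
    finally show "(Q * IJ) $$ (i,j) = K $$ (i,j)" using ij' by (auto simp: K_def)
  qed (auto simp: Q_def IJ_def K_def)
  have KR: "K * R = M"
  proof (rule eq_matI)
    fix i j assume ij: "i < dim_row M" "j < dim_col M"
    hence ij': "i < N" "j < N" by (auto simp: M_def)
    have e: "(K * R) $$ (i,j) = (\<Sum>k<N. (if i = 0 then (if k = 0 then 1 else 0) + s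
        else (if k = i then 1 else 0) - (if i = k + 1 then 1 else (0::real))) * (if j \<le> k then 1 else 0))"
      unfolding K_def R_def using ij' by (subst mult_mat_idx) auto
    show "(K * R) $$ (i,j) = M $$ (i,j)"
    proof (cases "i = 0")
      case True
      have "(K * R) $$ (i,j) = (\<Sum>k<N. (if k = 0 \<and> j \<le> k then 1 else 0) + (if j \<le> k then s else 0))"
        unfolding e using True by (intro sum.cong) auto
      also have "\<dots> = (\<Sum>k<N. (if k = 0 \<and> j \<le> k then 1 else 0)) + (\<Sum>k<N. if j \<le> k then s else 0)"
        by (rule sum.distrib)
      also have "(\<Sum>k<N. (if k = 0 \<and> j \<le> k then 1 else (0::real))) = (if j = 0 then 1 else 0)"
      proof -
        have "(\<Sum>k<N. (if k = 0 \<and> j \<le> k then 1 else (0::real))) = (\<Sum>k<N. (if k = 0 then (if j = 0 then 1 else 0) else 0))"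
          by (intro sum.cong) auto
        also have "\<dots> = (if j = 0 then 1 else 0)" using ij' by (simp add: sum.delta)
        finally show ?thesis .
      qed
      also have "(\<Sum>k<N. if j \<le> k then s else 0) = s * real (N - j)"
      proof -
        have "(\<Sum>k<N. if j \<le> k then s else 0) = (\<Sum>k\<in>{k. k < N \<and> j \<le> k}. s)"
          by (simp add: sum.If_cases lessThan_def Collect_conj_eq Int_commute)
        also have "{k. k < N \<and> j \<le> k} = {j..<N}" by auto
        finally show ?thesis by simp
      qed
      finally show ?thesis using True ij' by (auto simp: M_def)
    next
      case False
      then obtain i' where i': "i = Suc i'" by (cases i) auto
      have "(K * R) $$ (i,j) = (\<Sum>k<N. (if k = i then (if j \<le> k then 1 else 0) else 0)
           - (if k = i' then (if j \<le> k then 1 else 0) else (0::real)))"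
        unfolding e using False i' by (intro sum.cong) auto
      also have "\<dots> = (\<Sum>k<N. if k = i then (if j \<le> k then 1 else 0) else 0)
           - (\<Sum>k<N. if k = i' then (if j \<le> k then 1 else 0) else (0::real))"
        by (rule sum_subtractf)
      also have "\<dots> = (if j \<le> i then 1 else 0) - (if j \<le> i' then 1 else 0)"
        using ij' i' by (simp add: sum.delta)
      finally show ?thesis using False ij' i' by (auto simp: M_def)
    qed
  qed (auto simp: K_def R_def M_def)
  have ut: "upper_triangular M" unfolding upper_triangular_def M_def by auto
  have dM: "det M = 1 + s * real N"
  proof -
    have "det M = prod_list (diag_mat M)" by (rule det_upper_triangular[OF ut, of N]) (simp add: M_def)
    also have "diag_mat M = map (\<lambda>i. if i = 0 then 1 + s * real N else 1) [0..<N]"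
      unfolding diag_mat_def by (intro map_cong) (auto simp: M_def)
    also have "prod_list \<dots> = (\<Prod>i\<in>{0..<N}. if i = 0 then 1 + s * real N else 1)"
      using prod.distinct_set_conv_list[of "[0..<N]" "(\<lambda>i. if i = 0 then 1 + s * real N else 1)"] by simp
    also have "\<dots> = 1 + s * real N" using False by (simp add: prod.delta)
    finally show ?thesis .
  qed
  have cQ: "Q \<in> carrier_mat N N" and cR: "R \<in> carrier_mat N N" and cI: "IJ \<in> carrier_mat N N"
    by (auto simp: Q_def R_def IJ_def)
  have "det M = det (Q * IJ * R)" using QIJ KR by simp
  also have "\<dots> = det Q * det IJ * det R"
    using cQ cR cI by (simp add: det_mult[of _ N])
  finally show ?thesis using dQ dR dM by (simp add: IJ_def)
qed

lemma det_rank_one: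
  fixes A :: "real mat"
  assumes A: "A \<in> carrier_mat N N" and rs: "\<And>i. i < N \<Longrightarrow> (\<Sum>j<N. A $$ (i,j)) = l"
  shows "l * det (mat N N (\<lambda>(i,j). A $$ (i,j) + t)) = det A * (l + t * real N)"
proof (cases "l = 0")
  case True
  show ?thesis
  proof (cases "N = 0")
    case True
    thus ?thesis using A \<open>l = 0\<close> by simp
  next
    case False
    have "det A = 0"
      unfolding det_0_iff_vec_prod_zero_field[OF A]
    proof (intro exI[of _ "vec N (\<lambda>_. 1::real)"] conjI)
      show "vec N (\<lambda>_. 1::real) \<in> carrier_vec N" by simp
      show "vec N (\<lambda>_. 1::real) \<noteq> 0\<^sub>v N"
      proof
        assume "vec N (\<lambda>_. 1) = (0\<^sub>v N :: real vec)"
        hence "vec N (\<lambda>_. 1) $ 0 = (0\<^sub>v N :: real vec) $ 0" by simp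
        thus False using False by simp
      qed
      show "A *\<^sub>v vec N (\<lambda>_. 1) = 0\<^sub>v N"
      proof (rule eq_vecI)
        fix i assume "i < dim_vec (0\<^sub>v N :: real vec)"
        hence i: "i < N" by simp
        have "(A *\<^sub>v vec N (\<lambda>_. 1)) $ i = (\<Sum>j<N. A $$ (i,j))"
          using A i by (simp add: scalar_prod_def lessThan_atLeast0)
        thus "(A *\<^sub>v vec N (\<lambda>_. 1)) $ i = 0\<^sub>v N $ i" using rs[OF i] \<open>l = 0\<close> i by simp
      qed (use A in simp)
    qed
    thus ?thesis using \<open>l = 0\<close> by simp
  qed
next
  case False
  define B where "B = mat N N (\<lambda>(i,j). (if i = j then 1 else 0) + t / l)"
  have B: "B \<in> carrier_mat N N" by (simp add: B_def)
  have eq: "mat N N (\<lambda>(i,j). A $$ (i,j) + t) = A * B"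
  proof (rule eq_matI)
    fix i j assume ij: "i < dim_row (A * B)" "j < dim_col (A * B)"
    hence i: "i < N" and j: "j < N" using A B by auto
    have "(A * B) $$ (i,j) = (\<Sum>k<N. A $$ (i,k) * ((if k = j then 1 else 0) + t / l))"
      using A i j by (simp add: B_def scalar_prod_def lessThan_atLeast0)
    also have "\<dots> = (\<Sum>k<N. (if k = j then A $$ (i,k) else 0) + (t / l) * A $$ (i,k))"
      by (intro sum.cong) (auto simp: algebra_simps)
    also have "\<dots> = (\<Sum>k<N. (if k = j then A $$ (i,k) else 0)) + (t / l) * (\<Sum>k<N. A $$ (i,k))"
      by (simp add: sum.distrib sum_distrib_left)
    also have "\<dots> = A $$ (i,j) + t"
      using j rs[OF i] False by (simp add: sum.delta)
    finally show "mat N N (\<lambda>(i,j). A $$ (i,j) + t) $$ (i,j) = (A * B) $$ (i,j)" using i j by simp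
  qed (use A B in auto)
  have "det (mat N N (\<lambda>(i,j). A $$ (i,j) + t)) = det A * det B"
    unfolding eq by (rule det_mult[OF A B])
  also have "det B = 1 + t / l * real N" unfolding B_def by (rule det_IJ)
  finally have X: "det (mat N N (\<lambda>(i,j). A $$ (i,j) + t)) = det A * (1 + t / l * real N)" .
  show ?thesis unfolding X using False by (simp add: field_simps)
qed

lemma det_split_block:
  fixes A :: "real mat"
  assumes A: "A \<in> carrier_mat (n+K) (n+K)"
    and z: "\<And>i j. n \<le> i \<Longrightarrow> i < n+K \<Longrightarrow> j < n \<Longrightarrow> A $$ (i,j) = 0"
  shows "det A = det (mat n n (\<lambda>(i,j). A $$ (i,j))) * det (mat K K (\<lambda>(i,j). A $$ (i+n,j+n)))"
proof -
  define A1 where "A1 = mat n n (\<lambda>(i,j). A $$ (i,j))"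
  define A2 where "A2 = mat n K (\<lambda>(i,j). A $$ (i,j+n))"
  define A4 where "A4 = mat K K (\<lambda>(i,j). A $$ (i+n,j+n))"
  have eq: "A = four_block_mat A1 A2 (0\<^sub>m K n) A4"
  proof (rule eq_matI)
    fix i j assume "i < dim_row (four_block_mat A1 A2 (0\<^sub>m K n) A4)" "j < dim_col (four_block_mat A1 A2 (0\<^sub>m K n) A4)"
    hence ij: "i < n + K" "j < n + K" by (auto simp: A1_def A4_def)
    show "A $$ (i,j) = four_block_mat A1 A2 (0\<^sub>m K n) A4 $$ (i,j)"
      using ij z[of i j] by (auto simp: A1_def A2_def A4_def)
  qed (use A in \<open>auto simp: A1_def A4_def\<close>)
  have "det (four_block_mat A1 A2 (0\<^sub>m K n) A4) = det A1 * det A4"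
    by (rule det_four_block_mat_lower_left_zero) (auto simp: A1_def A2_def A4_def)
  with eq have "det A = det A1 * det A4" by simp
  thus ?thesis unfolding A1_def A4_def .
qed

lemma det_block_diag:
  assumes m: "0 < m"
  shows "det (mat (n*m) (n*m) (\<lambda>(q,q'). if q div m = q' div m then B (q div m) (q mod m) (q' mod m) else (0::real)))
     = (\<Prod>j<n. det (mat m m (\<lambda>(x,y). B j x y)))"
proof (induct n)
  case 0 show ?case by simp
next
  case (Suc n)
  define f where "f = (\<lambda>(q,q'). if q div m = q' div m then B (q div m) (q mod m) (q' mod m) else (0::real))"
  have e: "Suc n * m = n * m + m" by simp
  have c: "mat (Suc n * m) (Suc n * m) f \<in> carrier_mat (n*m + m) (n*m + m)" by (simp add: add.commute)
  have "det (mat (Suc n * m) (Suc n * m) f) = det (mat (n*m) (n*m) (\<lambda>(i,j). mat (Suc n * m) (Suc n * m) f $$ (i,j)))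
      * det (mat m m (\<lambda>(i,j). mat (Suc n * m) (Suc n * m) f $$ (i + n*m, j + n*m)))"
  proof (rule det_split_block[OF c])
    fix i j assume a: "n * m \<le> i" "i < n * m + m" "j < n * m"
    have "i div m = n" by (rule div_nat_eqI) (use a in \<open>auto simp: algebra_simps\<close>)
    moreover have "j div m < n" by (rule less_mult_imp_div_less) (use a in simp)
    ultimately show "mat (Suc n * m) (Suc n * m) f $$ (i,j) = 0" using a by (simp add: f_def)
  qed
  also have "mat (n*m) (n*m) (\<lambda>(i,j). mat (Suc n * m) (Suc n * m) f $$ (i,j)) = mat (n*m) (n*m) f"
    by (rule eq_matI) auto
  also have "mat m m (\<lambda>(i,j). mat (Suc n * m) (Suc n * m) f $$ (i + n*m, j + n*m)) = mat m m (\<lambda>(x,y). B n x y)"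
  proof (rule eq_matI)
    fix i j assume "i < dim_row (mat m m (\<lambda>(x,y). B n x y))" "j < dim_col (mat m m (\<lambda>(x,y). B n x y))"
    hence ij: "i < m" "j < m" by auto
    have "(i + n*m) div m = n" "(j + n*m) div m = n" "(i + n*m) mod m = i" "(j + n*m) mod m = j"
      using ij m by auto
    thus "mat m m (\<lambda>(i,j). mat (Suc n * m) (Suc n * m) f $$ (i + n*m, j + n*m)) $$ (i,j) = mat m m (\<lambda>(x,y). B n x y) $$ (i,j)"
      using ij by (simp add: f_def e)
  qed auto
  finally show ?case using Suc by (simp add: f_def)
qed



lemma sum_lessThan_add: "(\<Sum>k<n+(K::nat). g k) = (\<Sum>k<n. (g k :: real)) + (\<Sum>q<K. g (n+q))"
  by (induct K) (auto simp: add.assoc)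

lemma sum_div_mod: "(\<Sum>q<n*(m::nat). g q) = (\<Sum>j<n. \<Sum>x<m. (g (j*m+x) :: real))"
proof (induct n)
  case 0 then show ?case by simp
next
  case (Suc n)
  have "(\<Sum>q<Suc n * m. g q) = (\<Sum>q<n*m + m. g q)" by (simp add: add.commute)
  also have "\<dots> = (\<Sum>q<n*m. g q) + (\<Sum>x<m. g (n*m + x))" by (rule sum_lessThan_add)
  finally show ?case using Suc by simp
qed

definition cs :: "nat \<Rightarrow> nat \<Rightarrow> real \<Rightarrow> real \<Rightarrow> (nat \<Rightarrow> nat \<Rightarrow> real) \<Rightarrow> (nat \<Rightarrow> nat \<Rightarrow> nat \<Rightarrow> real)
   \<Rightarrow> nat \<Rightarrow> nat \<Rightarrow> real" where
 "cs n m b c S0 Sj i i' =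
  (if i < n then (if i' < n then S0 i i' else if (i' - n) div m = i then 1 - 2*b else 1)
   else if i' < n then (if (i - n) div m = i' then 1 - 2*b else 1)
   else if (i - n) div m \<noteq> (i' - n) div m then 1
   else Sj ((i - n) div m) ((i - n) mod m) ((i' - n) mod m) - (if i = i' then 0 else 2*c))"

lemma det_rank_one_fun:
  assumes rs: "\<And>i. i < N \<Longrightarrow> (\<Sum>j<N. f i j) = l"
  shows "l * det (mat N N (\<lambda>(i,j). f i j + t)) = det (mat N N (\<lambda>(i,j). f i j)) * (l + t * real N)"
proof -
  have e: "mat N N (\<lambda>(i,j). mat N N (\<lambda>(i,j). f i j) $$ (i,j) + t) = mat N N (\<lambda>(i,j). f i j + t)"
    by (rule eq_matI) auto
  have "l * det (mat N N (\<lambda>(i,j). mat N N (\<lambda>(i,j). f i j) $$ (i,j) + t)) = det (mat N N (\<lambda>(i,j). f i j)) * (l + t * real N)"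
    by (rule det_rank_one) (use rs in auto)
  thus ?thesis unfolding e .
qed

context
  fixes n m :: nat and b c \<mu> v1 w h a d s \<nu> :: real
    and S0 :: "nat \<Rightarrow> nat \<Rightarrow> real" and Sj :: "nat \<Rightarrow> nat \<Rightarrow> nat \<Rightarrow> real"
  assumes m: "0 < m"
    and rs0: "\<And>i. i < n \<Longrightarrow> (\<Sum>i'<n. S0 i i') = v1"
    and rsj: "\<And>j x. j < n \<Longrightarrow> x < m \<Longrightarrow> (\<Sum>y<m. Sj j x y) = w"
    and hdef: "h = w - 2*c*(real m - 1) - \<mu> - real m"
    and h0: "h \<noteq> 0" and hmn: "h + real m * real n \<noteq> 0"
    and ddef: "d = 2*b/h" and adef: "a = -(1 + real m*d)/(h + real m * real n)"
    and sdef: "s = real m * (real n * a - 2*a*b + d)"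
    and nudef: "\<nu> = \<mu> + 2*b*d*real m"
begin

definition Df where "Df i i' = cs n m b c S0 Sj i i' - (if i = i' then \<mu> else 0)"

lemma rs_base:
  assumes i: "i < n" and j: "j < n"
  shows "(\<Sum>x<m. Df i (n + (j*m+x))) = real m * (if j = i then 1 - 2*b else 1)"
proof -
  have "\<And>x. x < m \<Longrightarrow> Df i (n + (j*m+x)) = (if j = i then 1 - 2*b else 1)"
    using i by (auto simp: Df_def cs_def)
  hence "(\<Sum>x<m. Df i (n + (j*m+x))) = (\<Sum>x<m. (if j = i then 1 - 2*b else 1))"
    by (intro sum.cong) auto
  thus ?thesis by simp
qed

lemma rs_copy:
  assumes q: "q < n*m" and j: "j < n"
  shows "(\<Sum>x<m. Df (n+q) (n + (j*m+x))) = (if j = q div m then w - 2*c*(real m - 1) - \<mu> else real m)"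
proof (cases "j = q div m")
  case True
  have j0: "q div m < n" using q by (simp add: less_mult_imp_div_less)
  have qx: "q mod m < m" using m by simp
  have "\<And>x. x < m \<Longrightarrow> Df (n+q) (n + (j*m+x)) = Sj (q div m) (q mod m) x - 2*c + (if x = q mod m then 2*c - \<mu> else 0)"
  proof -
    fix x assume x: "x < m"
    have "(j*m + x) div m = j" "(j*m+x) mod m = x" using x m by auto
    moreover have "(n+q = n + (j*m+x)) = (x = q mod m)"
      using True x m by (metis add_left_cancel div_mult_mod_eq mod_mult_self3 mod_less add.commute)
    ultimately show "Df (n+q) (n + (j*m+x)) = Sj (q div m) (q mod m) x - 2*c + (if x = q mod m then 2*c - \<mu> else 0)"
      using True by (auto simp: Df_def cs_def)
  qed
  hence "(\<Sum>x<m. Df (n+q) (n + (j*m+x))) = (\<Sum>x<m. Sj (q div m) (q mod m) x - 2*c + (if x = q mod m then 2*c - \<mu> else 0))"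
    by (intro sum.cong) auto
  also have "\<dots> = (\<Sum>x<m. Sj (q div m) (q mod m) x) - 2*c*real m + (2*c - \<mu>)"
    using qx by (simp add: sum.distrib sum_subtractf sum.delta)
  also have "\<dots> = w - 2*c*(real m - 1) - \<mu>" using rsj[OF j0 qx] by (simp add: algebra_simps)
  finally show ?thesis using True by simp
next
  case False
  have "\<And>x. x < m \<Longrightarrow> Df (n+q) (n + (j*m+x)) = 1"
  proof -
    fix x assume x: "x < m"
    have "(j*m + x) div m = j" using x m by auto
    thus "Df (n+q) (n + (j*m+x)) = 1" using False by (auto simp: Df_def cs_def)
  qed
  hence "(\<Sum>x<m. Df (n+q) (n + (j*m+x))) = (\<Sum>x<m. 1)" by (intro sum.cong) auto
  thus ?thesis using False by simp
qed

lemma j0_lt: "q < n*m \<Longrightarrow> q div m < n"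
  by (simp add: less_mult_imp_div_less)

lemma alg_split:
  "det (mat (n + n*m) (n + n*m) (\<lambda>(i,i'). Df i i')) =
   det (mat n n (\<lambda>(i,i'). S0 i i' - (if i = i' then \<nu> else 0) + s))
   * det (mat (n*m) (n*m) (\<lambda>(q,q'). Df (q+n) (q'+n)))"
proof -
  define N where "N = n + n*m"
  define \<gamma> where "\<gamma> i' j = a + (if j = i' then d else 0)" for i' j :: nat
  define Tf where "Tf = (\<lambda>(i,i'). if i = i' then 1 else if i' < n \<and> n \<le> i then \<gamma> i' ((i-n) div m) else (0::real))"
  define G where "G = (\<lambda>(i,i'). if i' < n then (if i < n then S0 i i' - (if i = i' then \<nu> else 0) + s else 0) else Df i i')"
  have dT: "det (mat N N Tf) = 1" by (rule det_lower_one) (auto simp: Tf_def)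
  have ah: "a * (h + real m * real n) = -(1 + real m * d)" using hmn adef by (simp add: field_simps)
  have dh: "d * h = 2*b" using h0 ddef by (simp add: field_simps)
  have DT: "mat N N (\<lambda>(i,i'). Df i i') * mat N N Tf = mat N N G"
  proof (rule eq_matI)
    fix i i' assume "i < dim_row (mat N N G)" "i' < dim_col (mat N N G)"
    hence i: "i < N" and i': "i' < N" by auto
    have e: "(mat N N (\<lambda>(i,i'). Df i i') * mat N N Tf) $$ (i,i') = (\<Sum>k<N. Df i k * Tf (k,i'))"
      using i i' by (subst mult_mat_idx) auto
    show "(mat N N (\<lambda>(i,i'). Df i i') * mat N N Tf) $$ (i,i') = mat N N G $$ (i,i')"
    proof (cases "i' < n")
      case False
      have "(\<Sum>k<N. Df i k * Tf (k,i')) = (\<Sum>k<N. if k = i' then Df i k else 0)"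
        using False by (intro sum.cong) (auto simp: Tf_def)
      also have "\<dots> = Df i i'" using i' by simp
      finally show ?thesis unfolding e using i i' False by (simp add: G_def)
    next
      case True
      have "(\<Sum>k<N. Df i k * Tf (k,i')) = (\<Sum>k<N. (if k = i' then Df i k else 0)
             + (if n \<le> k then Df i k * \<gamma> i' ((k-n) div m) else 0))"
        using True by (intro sum.cong) (auto simp: Tf_def)
      also have "\<dots> = Df i i' + (\<Sum>k<n + n*m. if n \<le> k then Df i k * \<gamma> i' ((k-n) div m) else 0)"
        using i' by (simp add: sum.distrib N_def)
      also have "(\<Sum>k<n + n*m. if n \<le> k then Df i k * \<gamma> i' ((k-n) div m) else 0)
          = (\<Sum>q<n*m. Df i (n+q) * \<gamma> i' (q div m))"
        by (subst sum_lessThan_add) simp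
      also have "\<dots> = (\<Sum>j<n. \<Sum>x<m. Df i (n+(j*m+x)) * \<gamma> i' ((j*m+x) div m))"
        by (rule sum_div_mod)
      also have "\<dots> = (\<Sum>j<n. \<gamma> i' j * (\<Sum>x<m. Df i (n+(j*m+x))))"
        using m by (simp add: sum_distrib_left mult.commute)
      finally have e2: "(\<Sum>k<N. Df i k * Tf (k,i')) = Df i i' + (\<Sum>j<n. \<gamma> i' j * (\<Sum>x<m. Df i (n+(j*m+x))))" .
      show ?thesis
      proof (cases "i < n")
        case True2: True
        have "(\<Sum>j<n. \<gamma> i' j * (\<Sum>x<m. Df i (n+(j*m+x)))) = (\<Sum>j<n. \<gamma> i' j * (real m * (if j = i then 1 - 2*b else 1)))"
          using True2 by (intro sum.cong) (auto simp: rs_base)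
        also have "\<dots> = (\<Sum>j<n. a * real m + (if j = i then -2*a*b*real m else 0) + (if j = i' then d * real m else 0)
             + (if j = i' then (if i = i' then -2*b*d*real m else 0) else 0))"
          by (intro sum.cong) (auto simp: \<gamma>_def algebra_simps)
        also have "\<dots> = real n * a * real m - 2*a*b*real m + d * real m - (if i = i' then 2*b*d*real m else 0)"
          using True True2 by (simp add: sum.distrib)
        finally have e4: "(\<Sum>j<n. \<gamma> i' j * (\<Sum>x<m. Df i (n+(j*m+x)))) = real n * a * real m - 2*a*b*real m + d * real m - (if i = i' then 2*b*d*real m else 0)" .
        have "Df i i' = S0 i i' - (if i = i' then \<mu> else 0)" using True True2 by (simp add: Df_def cs_def)
        hence "(\<Sum>k<N. Df i k * Tf (k,i')) = S0 i i' - (if i = i' then \<nu> else 0) + s"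
          unfolding e2 e4 by (auto simp: sdef nudef algebra_simps)
        thus ?thesis unfolding e using i i' True True2 by (simp add: G_def)
      next
        case False2: False
        define q where "q = i - n"
        have q: "q < n*m" and iq: "i = n + q" using i False2 by (auto simp: q_def N_def)
        have j0: "q div m < n" using q by (rule j0_lt)
        have "(\<Sum>j<n. \<gamma> i' j * (\<Sum>x<m. Df i (n+(j*m+x))))
            = (\<Sum>j<n. \<gamma> i' j * (if j = q div m then w - 2*c*(real m - 1) - \<mu> else real m))"
          unfolding iq by (intro sum.cong) (auto simp: rs_copy[OF q])
        also have "\<dots> = (\<Sum>j<n. a * real m + (if j = q div m then a * h else 0) + (if j = i' then d * real m else 0)
             + (if j = i' then (if q div m = i' then d * h else 0) else 0))"
          by (intro sum.cong) (auto simp: \<gamma>_def algebra_simps hdef)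
        also have "\<dots> = real n * a * real m + a * h + d * real m + (if q div m = i' then d * h else 0)"
          using True j0 by (simp add: sum.distrib)
        finally have e3: "(\<Sum>j<n. \<gamma> i' j * (\<Sum>x<m. Df i (n+(j*m+x)))) = real n * a * real m + a * h + d * real m + (if q div m = i' then d * h else 0)" .
        have "Df i i' = (if q div m = i' then 1 - 2*b else 1)"
          using True False2 iq by (auto simp: Df_def cs_def)
        hence "(\<Sum>k<N. Df i k * Tf (k,i')) = 0"
          unfolding e2 e3 using ah dh by (auto simp: algebra_simps)
        thus ?thesis unfolding e using i i' True False2 by (simp add: G_def)
      qed
    qed
  qed auto
  have cD: "mat N N (\<lambda>(i,i'). Df i i') \<in> carrier_mat N N" and cT: "mat N N Tf \<in> carrier_mat N N" by auto
  have "det (mat N N (\<lambda>(i,i'). Df i i')) = det (mat N N G)"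
    using det_mult[OF cD cT] DT dT by simp
  also have "det (mat N N G) = det (mat n n (\<lambda>(i,j). mat N N G $$ (i,j))) * det (mat (n*m) (n*m) (\<lambda>(i,j). mat N N G $$ (i+n,j+n)))"
    by (rule det_split_block) (auto simp: N_def G_def)
  also have "mat n n (\<lambda>(i,j). mat N N G $$ (i,j)) = mat n n (\<lambda>(i,i'). S0 i i' - (if i = i' then \<nu> else 0) + s)"
    by (rule eq_matI) (auto simp: N_def G_def)
  also have "mat (n*m) (n*m) (\<lambda>(i,j). mat N N G $$ (i+n,j+n)) = mat (n*m) (n*m) (\<lambda>(q,q'). Df (q+n) (q'+n))"
    by (rule eq_matI) (auto simp: N_def G_def)
  finally show ?thesis unfolding N_def .
qed

lemma det_X:
  "h * det (mat (n*m) (n*m) (\<lambda>(q,q'). Df (q+n) (q'+n)))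
   = (\<Prod>j<n. det (mat m m (\<lambda>(x,y). Sj j x y - (if x = y then \<mu> - 2*c else 0) - (2*c+1)))) * (h + real (n*m))"
proof -
  define f where "f q q' = Df (q+n) (q'+n) - 1" for q q'
  have rs: "(\<Sum>q'<n*m. f q q') = h" if q: "q < n*m" for q
  proof -
    have j0: "q div m < n" using q by (rule j0_lt)
    have "(\<Sum>q'<n*m. f q q') = (\<Sum>j<n. \<Sum>x<m. f q (j*m+x))" by (rule sum_div_mod)
    also have "\<dots> = (\<Sum>j<n. (\<Sum>x<m. Df (n+q) (n+(j*m+x))) - real m)"
      by (simp add: f_def sum_subtractf add.commute)
    also have "\<dots> = (\<Sum>j<n. if j = q div m then h else 0)"
      by (intro sum.cong) (auto simp: rs_copy[OF q] hdef)
    also have "\<dots> = h" using j0 by simp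
    finally show ?thesis .
  qed
  have "h * det (mat (n*m) (n*m) (\<lambda>(i,j). f i j + 1)) = det (mat (n*m) (n*m) (\<lambda>(i,j). f i j)) * (h + 1 * real (n*m))"
    by (rule det_rank_one_fun) (use rs in auto)
  also have "mat (n*m) (n*m) (\<lambda>(i,j). f i j + 1) = mat (n*m) (n*m) (\<lambda>(q,q'). Df (q+n) (q'+n))"
    by (rule eq_matI) (auto simp: f_def)
  also have "mat (n*m) (n*m) (\<lambda>(i,j). f i j) = mat (n*m) (n*m) (\<lambda>(q,q'). if q div m = q' div m then
      (\<lambda>j x y. Sj j x y - (if x = y then \<mu> - 2*c else 0) - (2*c+1)) (q div m) (q mod m) (q' mod m) else 0)"
  proof (rule eq_matI)
    fix q q' assume "q < dim_row (mat (n * m) (n * m) (\<lambda>(q,q'). if q div m = q' div m then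
      (\<lambda>j x y. Sj j x y - (if x = y then \<mu> - 2*c else 0) - (2*c+1)) (q div m) (q mod m) (q' mod m) else 0))"
      "q' < dim_col (mat (n * m) (n * m) (\<lambda>(q,q'). if q div m = q' div m then
      (\<lambda>j x y. Sj j x y - (if x = y then \<mu> - 2*c else 0) - (2*c+1)) (q div m) (q mod m) (q' mod m) else 0))"
    hence q: "q < n*m" and q': "q' < n*m" by auto
    have eq: "(q = q') = (q div m = q' div m \<and> q mod m = q' mod m)"
      by (metis div_mult_mod_eq)
    show "mat (n*m) (n*m) (\<lambda>(i,j). f i j) $$ (q,q') = mat (n * m) (n * m) (\<lambda>(q,q'). if q div m = q' div m then
      (\<lambda>j x y. Sj j x y - (if x = y then \<mu> - 2*c else 0) - (2*c+1)) (q div m) (q mod m) (q' mod m) else 0) $$ (q,q')"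
      using q q' eq by (auto simp: f_def Df_def cs_def)
  qed auto
  also have "det (mat (n*m) (n*m) (\<lambda>(q,q'). if q div m = q' div m then
      (\<lambda>j x y. Sj j x y - (if x = y then \<mu> - 2*c else 0) - (2*c+1)) (q div m) (q mod m) (q' mod m) else 0))
     = (\<Prod>j<n. det (mat m m (\<lambda>(x,y). Sj j x y - (if x = y then \<mu> - 2*c else 0) - (2*c+1))))"
    by (rule det_block_diag[OF m])
  finally show ?thesis by simp
qed

lemma det_Yj:
  assumes j: "j < n"
  shows "(w - \<mu> + 2*c) * det (mat m m (\<lambda>(x,y). Sj j x y - (if x = y then \<mu> - 2*c else 0) - (2*c+1)))
     = det (mat m m (\<lambda>(x,y). Sj j x y - (if x = y then \<mu> - 2*c else 0))) * h"
proof -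
  have rs: "(\<Sum>y<m. Sj j x y - (if x = y then \<mu> - 2*c else 0)) = w - \<mu> + 2*c" if x: "x < m" for x
    using rsj[OF j x] x by (simp add: sum_subtractf)
  have A: "(w - \<mu> + 2*c) * det (mat m m (\<lambda>(x,y). (Sj j x y - (if x = y then \<mu> - 2*c else 0)) + (-(2*c+1))))
     = det (mat m m (\<lambda>(x,y). Sj j x y - (if x = y then \<mu> - 2*c else 0))) * ((w - \<mu> + 2*c) + (-(2*c+1)) * real m)"
    by (rule det_rank_one_fun) (use rs in auto)
  have hv: "(w - \<mu> + 2*c) + (-(2*c+1)) * real m = h" by (simp add: hdef algebra_simps)
  have M: "mat m m (\<lambda>(x,y). (Sj j x y - (if x = y then \<mu> - 2*c else 0)) + (-(2*c+1)))
     = mat m m (\<lambda>(x,y). Sj j x y - (if x = y then \<mu> - 2*c else 0) - (2*c+1))"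
    by (rule eq_matI) auto
  from A show ?thesis unfolding M hv .
qed

lemma det_P:
  "(v1 - \<nu>) * det (mat n n (\<lambda>(i,i'). S0 i i' - (if i = i' then \<nu> else 0) + s))
   = det (mat n n (\<lambda>(i,i'). S0 i i' - (if i = i' then \<nu> else 0))) * (v1 - \<nu> + s * real n)"
proof -
  have rs: "(\<Sum>i'<n. S0 i i' - (if i = i' then \<nu> else 0)) = v1 - \<nu>" if i: "i < n" for i
    using rs0[OF i] i by (simp add: sum_subtractf)
  show ?thesis by (rule det_rank_one_fun) (use rs in auto)
qed

lemma alg_final:
  assumes v: "v1 - \<nu> \<noteq> 0" and bt: "w - \<mu> + 2*c \<noteq> 0"
  shows "det (mat (n + n*m) (n + n*m) (\<lambda>(i,i'). Df i i')) =
    det (mat n n (\<lambda>(i,i'). S0 i i' - (if i = i' then \<nu> else 0))) * (v1 - \<nu> + s * real n) / (v1 - \<nu>)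
    * ((h + real m * real n) / h)
    * (\<Prod>j<n. det (mat m m (\<lambda>(x,y). Sj j x y - (if x = y then \<mu> - 2*c else 0))) * h / (w - \<mu> + 2*c))"
proof -
  have P: "det (mat n n (\<lambda>(i,i'). S0 i i' - (if i = i' then \<nu> else 0) + s)) =
    det (mat n n (\<lambda>(i,i'). S0 i i' - (if i = i' then \<nu> else 0))) * (v1 - \<nu> + s * real n) / (v1 - \<nu>)"
    using det_P v by (simp add: field_simps)
  have Y: "(\<Prod>j<n. det (mat m m (\<lambda>(x,y). Sj j x y - (if x = y then \<mu> - 2*c else 0) - (2*c+1))))
     = (\<Prod>j<n. det (mat m m (\<lambda>(x,y). Sj j x y - (if x = y then \<mu> - 2*c else 0))) * h / (w - \<mu> + 2*c))"
    by (intro prod.cong refl) (use det_Yj bt in \<open>auto simp: field_simps\<close>)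
  have X: "det (mat (n*m) (n*m) (\<lambda>(q,q'). Df (q+n) (q'+n))) =
     (h + real m * real n) / h * (\<Prod>j<n. det (mat m m (\<lambda>(x,y). Sj j x y - (if x = y then \<mu> - 2*c else 0))) * h / (w - \<mu> + 2*c))"
    using det_X h0 unfolding Y by (simp add: field_simps)
  show ?thesis unfolding alg_split P X by simp
qed

end


lemma seidel_idx:
  assumes "i < length vs" "j < length vs"
  shows "seidel_mat E vs $$ (i,j) = (if i = j then 0 else 1 - 2 * real (card {e\<in>E. vs!i \<in> e \<and> vs!j \<in> e}))"
  using assms by (simp add: seidel_mat_def adj_mat_def)

lemma dim_seidel[simp]: "dim_row (seidel_mat E vs) = length vs" "dim_col (seidel_mat E vs) = length vs"
  by (simp_all add: seidel_mat_def adj_mat_def)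

lemma det_perm_sim:
  fixes A :: "real mat"
  assumes A: "A \<in> carrier_mat N N" and p: "p permutes {0..<N}"
  shows "det (mat N N (\<lambda>(i,j). A $$ (p i, p j))) = det A"
proof -
  have pl: "\<And>i. i < N \<Longrightarrow> p i < N" using p by (meson atLeastLessThan_iff permutes_in_image zero_le)
  define B where "B = mat N N (\<lambda>(i,j). A $$ (i, p j))"
  have B: "B \<in> carrier_mat N N" by (simp add: B_def)
  have "det (mat N N (\<lambda>(i,j). B $$ (p i, j))) = signof p * det B" by (rule det_permute_rows[OF B p])
  moreover have "mat N N (\<lambda>(i,j). B $$ (p i, j)) = mat N N (\<lambda>(i,j). A $$ (p i, p j))"
    by (rule eq_matI) (auto simp: B_def pl)
  moreover have "det B = signof p * det A"
  proof -
    have At: "transpose_mat A \<in> carrier_mat N N" using A by simp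
    have "det B = det (transpose_mat B)" using det_transpose[OF B] by simp
    also have "transpose_mat B = mat N N (\<lambda>(i,j). transpose_mat A $$ (p i, j))"
      by (rule eq_matI) (use A in \<open>auto simp: B_def pl\<close>)
    also have "det \<dots> = signof p * det (transpose_mat A)" by (rule det_permute_rows[OF At p])
    also have "det (transpose_mat A) = det A" using det_transpose[OF A] .
    finally show ?thesis .
  qed
  ultimately have "det (mat N N (\<lambda>(i,j). A $$ (p i, p j))) = (signof p * signof p) * det A" by simp
  also have "(signof p * signof p :: real) = 1" by (simp add: of_int_mult[symmetric])
  finally show ?thesis by simp
qed

lemma charP_perm:
  assumes dx: "distinct xs" and dy: "distinct ys" and s: "set xs = set ys"
  shows "charP (seidel_mat E ys) \<mu> = charP (seidel_mat E xs) \<mu>"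
proof -
  define N where "N = length xs"
  have lN: "length ys = N" unfolding N_def using distinct_card[OF dx] distinct_card[OF dy] s by simp
  define p where "p i = (if i < N then (THE j. j < N \<and> xs!j = ys!i) else i)" for i
  have yin: "\<And>i. i < N \<Longrightarrow> ys!i \<in> set xs" using s lN by auto
  have ex: "\<exists>!j. j < N \<and> xs!j = ys!i" if i: "i < N" for i
  proof -
    obtain j where "j < N" "xs!j = ys!i" using yin[OF i] by (auto simp: in_set_conv_nth N_def)
    moreover have "\<And>j'. j' < N \<Longrightarrow> xs!j' = ys!i \<Longrightarrow> j' = j"
      using calculation dx nth_eq_iff_index_eq unfolding N_def by metis
    ultimately show ?thesis by blast
  qed
  have pl: "\<And>i. i < N \<Longrightarrow> p i < N" and xp: "\<And>i. i < N \<Longrightarrow> xs ! (p i) = ys ! i"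
    using theI'[OF ex] by (auto simp: p_def)
  have inj: "inj_on p {0..<N}"
  proof (rule inj_onI)
    fix i j assume "i \<in> {0..<N}" "j \<in> {0..<N}" "p i = p j"
    hence "ys!i = ys!j" "i < N" "j < N" using xp by (metis atLeastLessThan_iff)+
    thus "i = j" using dy lN by (simp add: nth_eq_iff_index_eq)
  qed
  have "p ` {0..<N} = {0..<N}" by (rule endo_inj_surj) (use pl inj in auto)
  hence "bij_betw p {0..<N} {0..<N}" using inj by (simp add: bij_betw_def)
  hence perm: "p permutes {0..<N}" by (rule bij_imp_permutes) (simp add: p_def)
  have peq: "\<And>i j. i < N \<Longrightarrow> j < N \<Longrightarrow> (p i = p j) = (i = j)" using inj by (auto simp: inj_on_def)
  define A where "A = seidel_mat E xs - \<mu> \<cdot>\<^sub>m 1\<^sub>m N"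
  have A: "A \<in> carrier_mat N N" by (rule carrier_matI) (simp_all add: A_def)
  have "seidel_mat E ys - \<mu> \<cdot>\<^sub>m 1\<^sub>m N = mat N N (\<lambda>(i,j). A $$ (p i, p j))"
  proof (rule eq_matI)
    fix i j assume "i < dim_row (mat N N (\<lambda>(i,j). A $$ (p i, p j)))" "j < dim_col (mat N N (\<lambda>(i,j). A $$ (p i, p j)))"
    hence ij: "i < N" "j < N" by auto
    show "(seidel_mat E ys - \<mu> \<cdot>\<^sub>m 1\<^sub>m N) $$ (i,j) = mat N N (\<lambda>(i,j). A $$ (p i, p j)) $$ (i,j)"
    proof -
      have L: "(seidel_mat E ys - \<mu> \<cdot>\<^sub>m 1\<^sub>m N) $$ (i,j) = seidel_mat E ys $$ (i,j) - (if i = j then \<mu> else 0)"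
        using ij lN by simp
      have R: "mat N N (\<lambda>(i,j). A $$ (p i, p j)) $$ (i,j) = seidel_mat E xs $$ (p i, p j) - (if p i = p j then \<mu> else 0)"
        using ij pl[OF ij(1)] pl[OF ij(2)] by (simp add: A_def N_def)
      have S: "seidel_mat E ys $$ (i,j) = seidel_mat E xs $$ (p i, p j)"
        using ij pl[OF ij(1)] pl[OF ij(2)] lN unfolding seidel_idx[of i ys j E, OF ij[folded lN]]
        by (subst seidel_idx) (simp_all add: N_def xp peq)
      show ?thesis unfolding L R S using peq[OF ij] by simp
    qed
  qed (auto simp: lN)
  hence "charP (seidel_mat E ys) \<mu> = det (mat N N (\<lambda>(i,j). A $$ (p i, p j)))"
    by (simp add: charP_def lN)
  also have "\<dots> = det A" by (rule det_perm_sim[OF A perm])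
  also have "\<dots> = charP (seidel_mat E xs) \<mu>" by (simp add: charP_def A_def N_def)
  finally show ?thesis .
qed

lemma reg_count:
  assumes reg: "kr_regular k r V E" and x: "x \<in> V"
  shows "(\<Sum>u\<in>V-{x}. card {e\<in>E. x \<in> e \<and> u \<in> e}) = r * (k - 1)"
proof -
  have fV: "finite V" and sub: "\<And>e. e \<in> E \<Longrightarrow> e \<subseteq> V" and ck: "\<And>e. e \<in> E \<Longrightarrow> card e = k"
    and deg: "card {e\<in>E. x \<in> e} = r"
    using reg x by (auto simp: kr_regular_def k_uniform_def hypergraph_def)
  have fE: "finite E" using sub fV by (meson Pow_iff finite_Pow_iff finite_subset subsetI)
  define Ex where "Ex = {e\<in>E. x \<in> e}"
  have fEx: "finite Ex" using fE by (simp add: Ex_def)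
  have "(\<Sum>u\<in>V-{x}. card {e\<in>E. x \<in> e \<and> u \<in> e}) = (\<Sum>u\<in>V-{x}. \<Sum>e\<in>Ex. if u \<in> e then 1 else 0)"
  proof (intro sum.cong refl)
    fix u
    have "{e\<in>E. x \<in> e \<and> u \<in> e} = {e\<in>Ex. u \<in> e}" by (auto simp: Ex_def)
    moreover have "card {e\<in>Ex. u \<in> e} = (\<Sum>_\<in>{e\<in>Ex. u \<in> e}. 1)" by (rule card_eq_sum)
    moreover have "(\<Sum>_\<in>{e\<in>Ex. u \<in> e}. 1) = (\<Sum>e\<in>Ex. if u \<in> e then 1 else (0::nat))"
      by (rule sum.inter_filter[OF fEx])
    ultimately show "card {e\<in>E. x \<in> e \<and> u \<in> e} = (\<Sum>e\<in>Ex. if u \<in> e then 1 else 0)" by simp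
  qed
  also have "\<dots> = (\<Sum>e\<in>Ex. \<Sum>u\<in>V-{x}. if u \<in> e then 1 else 0)" by (rule sum.swap)
  also have "\<dots> = (\<Sum>e\<in>Ex. k - 1)"
  proof (intro sum.cong refl)
    fix e assume e: "e \<in> Ex"
    have fVx: "finite (V - {x})" using fV by simp
    have "(\<Sum>u\<in>V-{x}. if u \<in> e then 1 else 0) = (\<Sum>_\<in>{u\<in>V-{x}. u \<in> e}. (1::nat))"
      by (rule sum.inter_filter[OF fVx, symmetric])
    also have "\<dots> = card {u\<in>V-{x}. u \<in> e}" by (rule card_eq_sum[symmetric])
    also have "{u\<in>V-{x}. u \<in> e} = e - {x}" using sub e by (auto simp: Ex_def)
    also have "card (e - {x}) = k - 1" using e ck by (auto simp: Ex_def)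
    finally show "(\<Sum>u\<in>V-{x}. if u \<in> e then 1 else 0) = k - 1" .
  qed
  also have "\<dots> = r * (k - 1)" using deg by (simp add: Ex_def)
  finally show ?thesis .
qed

lemma reg_rowsum:
  assumes reg: "kr_regular k r V E" and d: "distinct vs" and s: "set vs = V" and i: "i < length vs"
  shows "(\<Sum>j<length vs. seidel_mat E vs $$ (i,j)) = real (length vs) - 1 - 2 * real r * (real k - 1)"
proof -
  define L where "L = length vs"
  define x where "x = vs ! i"
  have xV: "x \<in> V" using s i by (auto simp: x_def)
  define g where "g u = (if u = x then 0 else real (card {e\<in>E. x \<in> e \<and> u \<in> e}))" for u
  have "(\<Sum>j<L. seidel_mat E vs $$ (i,j)) = (\<Sum>j<L. 1 - (if j = i then 1 else 0) - 2 * g (vs!j))"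
  proof (intro sum.cong refl)
    fix j assume j: "j \<in> {..<L}"
    have "(vs!j = x) = (j = i)" using d i j by (auto simp: x_def L_def nth_eq_iff_index_eq)
    thus "seidel_mat E vs $$ (i,j) = 1 - (if j = i then 1 else 0) - 2 * g (vs!j)"
      using i j by (auto simp: seidel_idx L_def g_def x_def)
  qed
  also have "\<dots> = real L - 1 - 2 * (\<Sum>j<L. g (vs!j))"
    using i by (simp add: sum_subtractf sum_distrib_left L_def)
  also have "(\<Sum>j<L. g (vs!j)) = (\<Sum>u\<in>V. g u)"
  proof -
    have "(\<Sum>j<L. g (vs!j)) = sum g ((!) vs ` {..<L})"
      by (rule sum.reindex[symmetric, unfolded comp_def]) (use d in \<open>auto simp: inj_on_def L_def nth_eq_iff_index_eq\<close>)
    also have "(!) vs ` {..<L} = V" using s by (auto simp: L_def in_set_conv_nth)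
    finally show ?thesis .
  qed
  also have "(\<Sum>u\<in>V. g u) = (\<Sum>u\<in>V-{x}. real (card {e\<in>E. x \<in> e \<and> u \<in> e}))"
  proof -
    have fV: "finite V" using reg by (simp add: kr_regular_def k_uniform_def hypergraph_def)
    have "(\<Sum>u\<in>V. g u) = g x + (\<Sum>u\<in>V-{x}. g u)" using fV xV by (simp add: sum.remove)
    thus ?thesis by (simp add: g_def)
  qed
  also have "\<dots> = real (r * (k - 1))" using reg_count[OF reg xV] by (simp flip: of_nat_sum)
  also have "real (r * (k - 1)) = real r * (real k - 1)"
  proof (cases "k = 0")
    case True
    have "\<And>e. e \<in> E \<Longrightarrow> False" using reg True by (force simp: kr_regular_def k_uniform_def hypergraph_def)
    hence "{e\<in>E. x \<in> e} = {}" by auto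
    moreover have "card {e\<in>E. x \<in> e} = r" using reg xV by (simp add: kr_regular_def)
    ultimately have "r = 0" by (metis card.empty)
    thus ?thesis by simp
  next
    case False thus ?thesis by (simp add: of_nat_diff)
  qed
  finally show ?thesis unfolding L_def by simp
qed

lemma count_supsets:
  assumes fW: "finite W" and F: "F \<subseteq> W" and k: "card F \<le> k"
  shows "card {e. e \<subseteq> W \<and> card e = k \<and> F \<subseteq> e} = (card W - card F) choose (k - card F)"
proof -
  have fF: "finite F" using F fW by (rule finite_subset)
  have "bij_betw (\<lambda>e. e - F) {e. e \<subseteq> W \<and> card e = k \<and> F \<subseteq> e} {T. T \<subseteq> W - F \<and> card T = k - card F}"
  proof (rule bij_betw_byWitness[where f' = "\<lambda>T. T \<union> F"])
    show "\<forall>a\<in>{e. e \<subseteq> W \<and> card e = k \<and> F \<subseteq> e}. a - F \<union> F = a" by auto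
    show "\<forall>a'\<in>{T. T \<subseteq> W - F \<and> card T = k - card F}. a' \<union> F - F = a'" by auto
    show "(\<lambda>e. e - F) ` {e. e \<subseteq> W \<and> card e = k \<and> F \<subseteq> e} \<subseteq> {T. T \<subseteq> W - F \<and> card T = k - card F}"
      using fF by (auto simp: card_Diff_subset)
    show "(\<lambda>T. T \<union> F) ` {T. T \<subseteq> W - F \<and> card T = k - card F} \<subseteq> {e. e \<subseteq> W \<and> card e = k \<and> F \<subseteq> e}"
    proof clarify
      fix T assume T: "T \<subseteq> W - F" "card T = k - card F"
      have "finite T" using T fW by (meson finite_Diff finite_subset)
      hence "card (T \<union> F) = card T + card F" using T fF by (subst card_Un_disjoint) auto
      thus "T \<union> F \<subseteq> W \<and> card (T \<union> F) = k \<and> F \<subseteq> T \<union> F" using T F k by auto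
    qed
  qed
  hence "card {e. e \<subseteq> W \<and> card e = k \<and> F \<subseteq> e} = card {T. T \<subseteq> W - F \<and> card T = k - card F}"
    by (rule bij_betw_same_card)
  also have "\<dots> = card (W - F) choose (k - card F)" using fW by (simp add: n_subsets)
  also have "card (W - F) = card W - card F" using F fF by (simp add: card_Diff_subset)
  finally show ?thesis .
qed

lemma count_supsets0:
  assumes fW: "finite W" and F: "F \<subseteq> W" and k: "k < card F"
  shows "{e. e \<subseteq> W \<and> card e = k \<and> F \<subseteq> e} = {}"
proof -
  { fix e assume "e \<subseteq> W" "card e = k" "F \<subseteq> e"
    hence "card F \<le> card e" using fW by (meson card_mono finite_subset)
    hence False using k \<open>card e = k\<close> by simp }
  thus ?thesis by auto
qed



lemma inj_on_image_of_inj: "inj f \<Longrightarrow> inj_on (image f) A"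
  by (simp add: inj_on_def inj_image_eq_iff)

lemma mem_corona_E:
  "e \<in> gen_corona_E k E0 n 1 U VG EG \<longleftrightarrow>
    (\<exists>e0\<in>E0. e = Inl ` e0)
  \<or> (\<exists>i\<in>{1..n}. \<exists>e'\<in>EG i. e = (\<lambda>x. Inr (i,1,x)) ` e')
  \<or> (\<exists>i\<in>{1..n}. e \<subseteq> Inl ` U i \<union> (\<lambda>x. Inr (i,1,x)) ` VG i \<and> card e = k
        \<and> e \<inter> Inl ` U i \<noteq> {} \<and> e \<inter> (\<lambda>x. Inr (i,1,x)) ` VG i \<noteq> {})"
  unfolding gen_corona_E_def corona_copy_def by auto

context
  fixes k n m :: nat and E0 :: "'a set set" and vs0 :: "'a list"
    and VG :: "nat \<Rightarrow> 'b set" and EG :: "nat \<Rightarrow> 'b set set"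
  assumes dv: "distinct vs0" and ln: "length vs0 = n"
    and hEG: "\<And>i. i \<in> {1..n} \<Longrightarrow> \<forall>e\<in>EG i. e \<subseteq> VG i"
    and fVG: "\<And>i. i \<in> {1..n} \<Longrightarrow> finite (VG i)"
    and cVG: "\<And>i. i \<in> {1..n} \<Longrightarrow> card (VG i) = m"
begin

abbreviation "Ec \<equiv> gen_corona_E k E0 n 1 (\<lambda>i. {vs0 ! (i - 1)}) VG EG"
abbreviation "Cp i \<equiv> ((\<lambda>x. Inr (i,1::nat,x)) ` VG i :: ('a + nat \<times> nat \<times> 'b) set)"

lemma memE: "e \<in> Ec \<longleftrightarrow>
    (\<exists>e0\<in>E0. e = Inl ` e0)
  \<or> (\<exists>i\<in>{1..n}. \<exists>e'\<in>EG i. e = (\<lambda>x. Inr (i,1,x)) ` e')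
  \<or> (\<exists>i\<in>{1..n}. e \<subseteq> insert (Inl (vs0!(i-1))) (Cp i) \<and> card e = k
        \<and> Inl (vs0!(i-1)) \<in> e \<and> e \<inter> Cp i \<noteq> {})"
  unfolding mem_corona_E by auto

lemma inj_Inr: "inj (\<lambda>x. Inr (i,1::nat,x) :: 'a + nat \<times> nat \<times> 'b)" by (auto simp: inj_def)

lemma card_W:
  assumes i: "i \<in> {1..n}"
  shows "finite (insert (Inl (vs0!(i-1))) (Cp i))" "card (insert (Inl (vs0!(i-1))) (Cp i)) = m + 1"
proof -
  have "card (Cp i) = m" using cVG[OF i] card_image[OF inj_on_subset[OF inj_Inr subset_UNIV]] by simp
  moreover have "finite (Cp i)" using fVG[OF i] by simp
  moreover have "Inl (vs0!(i-1)) \<notin> Cp i" by auto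
  ultimately show "finite (insert (Inl (vs0!(i-1))) (Cp i))" "card (insert (Inl (vs0!(i-1))) (Cp i)) = m + 1"
    by simp_all
qed

lemma E1:
  assumes "a \<noteq> a'"
  shows "card {e\<in>Ec. Inl a \<in> e \<and> Inl a' \<in> e} = card {e\<in>E0. a \<in> e \<and> a' \<in> e}"
proof -
  have "{e\<in>Ec. Inl a \<in> e \<and> Inl a' \<in> e} = image Inl ` {e\<in>E0. a \<in> e \<and> a' \<in> e}"
  proof (intro equalityI subsetI)
    fix e assume e: "e \<in> {e\<in>Ec. Inl a \<in> e \<and> Inl a' \<in> e}"
    hence "e \<in> Ec" "Inl a \<in> e" "Inl a' \<in> e" by auto
    then consider (A) "\<exists>e0\<in>E0. e = Inl ` e0" | (B) "\<exists>i\<in>{1..n}. \<exists>e'\<in>EG i. e = (\<lambda>x. Inr (i,1,x)) ` e'"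
      | (C) "\<exists>i\<in>{1..n}. e \<subseteq> insert (Inl (vs0!(i-1))) (Cp i)" unfolding memE by blast
    thus "e \<in> image Inl ` {e\<in>E0. a \<in> e \<and> a' \<in> e}"
    proof cases
      case A thus ?thesis using \<open>Inl a \<in> e\<close> \<open>Inl a' \<in> e\<close> by auto
    next
      case B thus ?thesis using \<open>Inl a \<in> e\<close> by auto
    next
      case C
      then obtain i where "e \<subseteq> insert (Inl (vs0!(i-1))) (Cp i)" by blast
      hence "a = vs0!(i-1)" "a' = vs0!(i-1)" using \<open>Inl a \<in> e\<close> \<open>Inl a' \<in> e\<close> by auto
      thus ?thesis using assms by simp
    qed
  next
    fix e :: "('a + nat \<times> nat \<times> 'b) set" assume "e \<in> image Inl ` {e\<in>E0. a \<in> e \<and> a' \<in> e}"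
    thus "e \<in> {e\<in>Ec. Inl a \<in> e \<and> Inl a' \<in> e}" unfolding memE by auto
  qed
  moreover have "inj_on (image (Inl :: 'a \<Rightarrow> 'a + nat \<times> nat \<times> 'b)) {e\<in>E0. a \<in> e \<and> a' \<in> e}"
    by (rule inj_onI) (metis inj_Inl inj_image_eq_iff)
  ultimately show ?thesis by (simp add: card_image)
qed

lemma E3:
  assumes "i \<noteq> i'"
  shows "card {e\<in>Ec. Inr (i,1,x) \<in> e \<and> Inr (i',1,y) \<in> e} = 0"
proof -
  have "{e\<in>Ec. Inr (i,1,x) \<in> e \<and> Inr (i',1,y) \<in> e} = {}"
  proof (rule ccontr)
    assume "{e\<in>Ec. Inr (i,1,x) \<in> e \<and> Inr (i',1,y) \<in> e} \<noteq> {}"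
    then obtain e where "e \<in> Ec" "Inr (i,1,x) \<in> e" "Inr (i',1,y) \<in> e" by auto
    thus False unfolding memE using assms by auto
  qed
  thus ?thesis by (simp only: card.empty)
qed

lemma E2:
  assumes i: "i \<in> {1..n}" and y: "y \<in> VG i" and k: "2 \<le> k"
  shows "card {e\<in>Ec. Inl a \<in> e \<and> Inr (i,1,y) \<in> e} = (if a = vs0!(i-1) then (m - 1) choose (k - 2) else 0)"
proof -
  define v where "v = vs0!(i-1)"
  define W where "W = insert (Inl v) (Cp i)"
  have S: "{e\<in>Ec. Inl a \<in> e \<and> Inr (i,1,y) \<in> e} = (if a = v then {e. e \<subseteq> W \<and> card e = k \<and> {Inl v, Inr (i,1,y)} \<subseteq> e} else {})"
  proof (intro equalityI subsetI)
    fix e assume "e \<in> {e\<in>Ec. Inl a \<in> e \<and> Inr (i,1,y) \<in> e}"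
    hence e: "e \<in> Ec" "Inl a \<in> e" "Inr (i,1,y) \<in> e" by auto
    then consider (A) "\<exists>e0\<in>E0. e = Inl ` e0" | (B) "\<exists>i\<in>{1..n}. \<exists>e'\<in>EG i. e = (\<lambda>x. Inr (i,1,x)) ` e'"
      | (C) i' where "i' \<in> {1..n}" "e \<subseteq> insert (Inl (vs0!(i'-1))) (Cp i')" "card e = k" "Inl (vs0!(i'-1)) \<in> e"
      unfolding memE by blast
    thus "e \<in> (if a = v then {e. e \<subseteq> W \<and> card e = k \<and> {Inl v, Inr (i,1,y)} \<subseteq> e} else {})"
    proof cases
      case A thus ?thesis using e by auto
    next
      case B thus ?thesis using e by auto
    next
      case C
      have "i' = i" using C(2) e(3) by auto
      moreover have "a = vs0!(i'-1)" using C(2) e(2) by auto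
      ultimately show ?thesis using C e by (auto simp: v_def W_def)
    qed
  next
    fix e assume e: "e \<in> (if a = v then {e. e \<subseteq> W \<and> card e = k \<and> {Inl v, Inr (i,1,y)} \<subseteq> e} else {})"
    hence av: "a = v" by (auto split: if_splits)
    have "Inr (i,1,y) \<in> e \<inter> Cp i" using e y av by (auto split: if_splits)
    moreover have "e \<subseteq> W" "card e = k" "{Inl v, Inr (i,1,y)} \<subseteq> e" using e av by (auto split: if_splits)
    ultimately have "e \<in> Ec" unfolding memE
      by (intro disjI2 bexI[of _ i] conjI) (use i in \<open>auto simp: W_def v_def\<close>)
    thus "e \<in> {e\<in>Ec. Inl a \<in> e \<and> Inr (i,1,y) \<in> e}" using \<open>{Inl v, Inr (i,1,y)} \<subseteq> e\<close> av by auto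
  qed
  show ?thesis
  proof (cases "a = v")
    case True
    have F: "{Inl v, Inr (i,1,y)} \<subseteq> W" using y by (auto simp: W_def)
    have cF: "card ({Inl v, Inr (i,1,y)} :: ('a + nat \<times> nat \<times> 'b) set) = 2" by simp
    have fW: "finite W" and cW: "card W = m + 1" using card_W[OF i] by (simp_all add: W_def v_def)
    have c: "card {e. e \<subseteq> W \<and> card e = k \<and> {Inl v, Inr (i,1,y)} \<subseteq> e}
       = (card W - card ({Inl v, Inr (i,1,y)} :: ('a + nat \<times> nat \<times> 'b) set)) choose (k - card ({Inl v, Inr (i,1,y)} :: ('a + nat \<times> nat \<times> 'b) set))"
      by (rule count_supsets[OF fW F]) (use k in simp)
    have "card {e. e \<subseteq> W \<and> card e = k \<and> {Inl v, Inr (i,1,y)} \<subseteq> e} = (card W - 2) choose (k - 2)"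
      using c unfolding cF .
    thus ?thesis using S True cW by (simp add: v_def)
  next
    case False
    have E: "{e\<in>Ec. Inl a \<in> e \<and> Inr (i,1,y) \<in> e} = {}" unfolding S using False by simp
    show ?thesis unfolding E using False by (simp add: v_def)
  qed
qed

lemma E4:
  assumes i: "i \<in> {1..n}" and x: "x \<in> VG i" and y: "y \<in> VG i" and xy: "x \<noteq> y"
  shows "card {e\<in>Ec. Inr (i,1,x) \<in> e \<and> Inr (i,1,y) \<in> e}
     = card {e\<in>EG i. x \<in> e \<and> y \<in> e} + (if 3 \<le> k then (m - 2) choose (k - 3) else 0)"
proof -
  define v where "v = vs0!(i-1)"
  define W where "W = insert (Inl v) (Cp i)"
  define F :: "('a + nat \<times> nat \<times> 'b) set" where "F = {Inl v, Inr (i,1,x), Inr (i,1,y)}"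
  define L where "L = (image (\<lambda>z. Inr (i,1,z) :: 'a + nat \<times> nat \<times> 'b)) ` {e\<in>EG i. x \<in> e \<and> y \<in> e}"
  define R where "R = {e. e \<subseteq> W \<and> card e = k \<and> F \<subseteq> e}"
  have fW: "finite W" and cW: "card W = m + 1" using card_W[OF i] by (simp_all add: W_def v_def)
  have FW: "F \<subseteq> W" using x y by (auto simp: F_def W_def)
  have cF: "card F = 3" using xy by (simp add: F_def)
  have S: "{e\<in>Ec. Inr (i,1,x) \<in> e \<and> Inr (i,1,y) \<in> e} = L \<union> R"
  proof (intro equalityI subsetI)
    fix e assume "e \<in> {e\<in>Ec. Inr (i,1,x) \<in> e \<and> Inr (i,1,y) \<in> e}"
    hence e: "e \<in> Ec" "Inr (i,1,x) \<in> e" "Inr (i,1,y) \<in> e" by auto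
    then consider (A) "\<exists>e0\<in>E0. e = Inl ` e0" | (B) i' e' where "i' \<in> {1..n}" "e' \<in> EG i'" "e = (\<lambda>x. Inr (i',1,x)) ` e'"
      | (C) i' where "i' \<in> {1..n}" "e \<subseteq> insert (Inl (vs0!(i'-1))) (Cp i')" "card e = k" "Inl (vs0!(i'-1)) \<in> e"
      unfolding memE by blast
    thus "e \<in> L \<union> R"
    proof cases
      case A thus ?thesis using e by auto
    next
      case B
      have "i' = i" "x \<in> e'" "y \<in> e'" using B(3) e(2,3) by auto
      thus ?thesis using B by (auto simp: L_def)
    next
      case C
      have "i' = i" using C(2) e(3) by auto
      thus ?thesis using C e by (auto simp: R_def W_def F_def v_def)
    qed
  next
    fix e assume "e \<in> L \<union> R"
    thus "e \<in> {e\<in>Ec. Inr (i,1,x) \<in> e \<and> Inr (i,1,y) \<in> e}"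
    proof
      assume "e \<in> L"
      then obtain e' where e': "e' \<in> EG i" "x \<in> e'" "y \<in> e'" "e = (\<lambda>z. Inr (i,1,z)) ` e'" by (auto simp: L_def)
      have "e \<in> Ec" unfolding memE
        apply (rule disjI2, rule disjI1, rule bexI[of _ i], rule bexI[of _ e'])
        using e' i by auto
      thus ?thesis using e' by auto
    next
      assume e: "e \<in> R"
      have "Inr (i,1,y) \<in> e \<inter> Cp i" using e y by (auto simp: R_def F_def)
      moreover have "e \<subseteq> W" "card e = k" "F \<subseteq> e" using e by (auto simp: R_def)
      ultimately have "e \<in> Ec" unfolding memE
        by (intro disjI2 bexI[of _ i] conjI) (use i in \<open>auto simp: W_def v_def F_def\<close>)
      thus ?thesis using \<open>F \<subseteq> e\<close> by (auto simp: F_def)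
    qed
  qed
  have fEG: "finite (EG i)"
  proof -
    have "EG i \<subseteq> Pow (VG i)" using hEG[OF i] by auto
    thus ?thesis using fVG[OF i] by (meson finite_Pow_iff finite_subset)
  qed
  have fL: "finite L" using fEG by (simp add: L_def)
  have fR: "finite R"
  proof -
    have "R \<subseteq> Pow W" by (auto simp: R_def)
    thus ?thesis using fW by (meson finite_Pow_iff finite_subset)
  qed
  have d1: "\<forall>e\<in>L. Inl v \<notin> e" unfolding L_def by blast
  have d2: "\<forall>e\<in>R. Inl v \<in> e" unfolding R_def F_def by blast
  have dis: "L \<inter> R = {}" using d1 d2 by blast
  have cL: "card L = card {e\<in>EG i. x \<in> e \<and> y \<in> e}"
    unfolding L_def by (rule card_image[OF inj_on_image_of_inj[OF inj_Inr]])
  have cR: "card R = (if 3 \<le> k then (m - 2) choose (k - 3) else 0)"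
  proof (cases "3 \<le> k")
    case True
    have "card R = (card W - card F) choose (k - card F)"
      unfolding R_def by (rule count_supsets[OF fW FW]) (use cF True in simp)
    thus ?thesis using cW cF True by simp
  next
    case False
    have "R = {}" unfolding R_def by (rule count_supsets0[OF fW FW]) (use cF False in simp)
    thus ?thesis using False by simp
  qed
  have "card (L \<union> R) = card L + card R" by (rule card_Un_disjoint[OF fL fR dis])
  thus ?thesis unfolding S cL cR .
qed

end


lemma c_eq:
  assumes "2 \<le> m" "2 \<le> k"
  shows "real ((m-1) choose (k-2)) - real ((m-2) choose (k-2)) = real (if 3 \<le> k then (m-2) choose (k-3) else 0)"
proof (cases "k = 2")
  case True thus ?thesis by simp
next
  case False
  hence k3: "k - 2 = Suc (k - 3)" using assms by simp
  have m1: "m - 1 = Suc (m - 2)" using assms by simp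
  have "((m-1) choose (k-2)) = ((m-2) choose (k-3)) + ((m-2) choose (k-2))"
    unfolding k3 m1 by simp
  thus ?thesis using False assms by simp
qed

context
  fixes k n m :: nat and E0 :: "'a set set" and vs0 :: "'a list" and V0 :: "'a set"
    and VG :: "nat \<Rightarrow> 'b set" and EG :: "nat \<Rightarrow> 'b set set" and ws :: "nat \<Rightarrow> 'b list" and r :: nat
  assumes hk: "2 \<le> k" and hm: "2 \<le> m"
    and dv: "distinct vs0" and sv: "set vs0 = V0" and ln: "length vs0 = n"
    and Gj: "\<forall>j\<in>{1..n}. kr_regular k r (VG j) (EG j)"
    and wsd: "\<forall>j\<in>{1..n}. distinct (ws j) \<and> set (ws j) = VG j \<and> length (ws j) = m"
begin

lemma hEG: "\<And>i. i \<in> {1..n} \<Longrightarrow> \<forall>e\<in>EG i. e \<subseteq> VG i"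
  using Gj by (auto simp: kr_regular_def k_uniform_def hypergraph_def)
lemma fVG: "\<And>i. i \<in> {1..n} \<Longrightarrow> finite (VG i)"
  using wsd by (metis List.finite_set)
lemma cVG: "\<And>i. i \<in> {1..n} \<Longrightarrow> card (VG i) = m"
  using wsd distinct_card by fastforce

definition "cv = map Inl vs0 @ map (\<lambda>q. Inr (q div m + 1, 1::nat, ws (q div m + 1) ! (q mod m))) [0..<n*m]"
definition "bb = real ((m-1) choose (k-2))"
definition "cc = real ((m-1) choose (k-2)) - real ((m-2) choose (k-2))"
definition "S0f i i' = seidel_mat E0 vs0 $$ (i,i')"
definition "Sjf j x y = seidel_mat (EG (j+1)) (ws (j+1)) $$ (x,y)"

lemma m0: "0 < m" using hm by simp

lemma cv_len: "length cv = n + n*m" by (simp add: cv_def ln)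

lemma cv1: "i < n \<Longrightarrow> cv ! i = Inl (vs0 ! i)" by (simp add: cv_def nth_append ln)

lemma cv2: "n \<le> i \<Longrightarrow> i < n + n*m \<Longrightarrow>
   cv ! i = Inr ((i-n) div m + 1, 1, ws ((i-n) div m + 1) ! ((i-n) mod m))"
proof -
  assume a: "n \<le> i" "i < n + n*m"
  hence "i - n < n*m" by simp
  thus ?thesis using a by (simp add: cv_def nth_append ln nth_upt)
qed

lemma jlt: "n \<le> i \<Longrightarrow> i < n + n*m \<Longrightarrow> (i-n) div m < n"
  by (rule less_mult_imp_div_less) simp

lemma wsin: "j < n \<Longrightarrow> x < m \<Longrightarrow> ws (j+1) ! x \<in> VG (j+1)"
  using wsd by (metis atLeastAtMost_iff le_add2 nth_mem Suc_eq_plus1 Suc_leI)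

lemma cv_set: "set cv = gen_corona_V V0 n 1 VG"
proof -
  have "(set (map (\<lambda>q. Inr (q div m + 1, 1::nat, ws (q div m + 1) ! (q mod m))) [0..<n*m]) :: ('a + nat \<times> nat \<times> 'b) set)
     = (\<Union>i\<in>{1..n}. (\<lambda>x. Inr (i,1,x)) ` VG i)" (is "?A = ?B")
  proof (intro equalityI subsetI)
    fix z assume "z \<in> ?A"
    then obtain q where q: "q < n*m" "z = Inr (q div m + 1, 1::nat, ws (q div m + 1) ! (q mod m))" by auto
    have "q div m < n" using q by (simp add: less_mult_imp_div_less)
    moreover have "q mod m < m" using m0 by simp
    ultimately show "z \<in> ?B" using q wsin by force
  next
    fix z assume "z \<in> ?B"
    then obtain i x where i: "i \<in> {1..n}" "x \<in> VG i" "z = Inr (i,1,x)" by auto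
    then obtain t where t: "t < m" "ws i ! t = x" using wsd by (metis in_set_conv_nth)
    define q where "q = (i - 1) * m + t"
    have qd: "q div m = i - 1" "q mod m = t" using t m0 by (auto simp: q_def)
    have "q < n * m"
    proof -
      have "(i - 1) * m + t < (i - 1) * m + m" using t by simp
      also have "\<dots> = i * m" using i by (cases i) auto
      also have "\<dots> \<le> n * m" using i by simp
      finally show ?thesis by (simp add: q_def)
    qed
    thus "z \<in> ?A" using i t qd by (auto intro!: image_eqI[of _ _ q])
  qed
  thus ?thesis by (simp add: cv_def gen_corona_V_def corona_copy_def sv)
qed

lemma cv_distinct: "distinct cv"
proof -
  have "inj_on (\<lambda>q. Inr (q div m + 1, 1::nat, ws (q div m + 1) ! (q mod m)) :: 'a + nat \<times> nat \<times> 'b) {0..<n*m}"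
  proof (rule inj_onI)
    fix q q' assume q: "q \<in> {0..<n*m}" "q' \<in> {0..<n*m}"
      and e: "(Inr (q div m + 1, 1::nat, ws (q div m + 1) ! (q mod m)) :: 'a + nat \<times> nat \<times> 'b)
         = Inr (q' div m + 1, 1, ws (q' div m + 1) ! (q' mod m))"
    hence d: "q div m = q' div m" by simp
    have j: "q div m < n" using q by (simp add: less_mult_imp_div_less)
    hence "q div m + 1 \<in> {1..n}" by simp
    hence dd: "distinct (ws (q div m + 1))" "length (ws (q div m + 1)) = m" using wsd by auto
    have "ws (q div m + 1) ! (q mod m) = ws (q div m + 1) ! (q' mod m)" using e d by simp
    hence "q mod m = q' mod m" using dd m0 by (simp add: nth_eq_iff_index_eq)
    thus "q = q'" using d by (metis div_mult_mod_eq)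
  qed
  thus ?thesis by (auto simp: cv_def distinct_map dv)
qed

abbreviation "Ecor \<equiv> gen_corona_E k E0 n 1 (\<lambda>i. {vs0 ! (i - 1)}) VG EG"

lemma wsprops: "j < n \<Longrightarrow> distinct (ws (j+1)) \<and> length (ws (j+1)) = m"
  using wsd by auto

lemma seid_cor: "seidel_mat Ecor cv = mat (n + n*m) (n + n*m) (\<lambda>(i,i'). cs n m bb cc S0f Sjf i i')"
proof (rule eq_matI)
  fix i i' assume "i < dim_row (mat (n + n*m) (n + n*m) (\<lambda>(i,i'). cs n m bb cc S0f Sjf i i'))"
    "i' < dim_col (mat (n + n*m) (n + n*m) (\<lambda>(i,i'). cs n m bb cc S0f Sjf i i'))"
  hence i: "i < n + n*m" and i': "i' < n + n*m" by auto
  have L: "seidel_mat Ecor cv $$ (i,i') = (if i = i' then 0 else 1 - 2 * real (card {e\<in>Ecor. cv!i \<in> e \<and> cv!i' \<in> e}))"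
    using i i' cv_len by (simp add: seidel_idx)
  have R: "mat (n + n*m) (n + n*m) (\<lambda>(i,i'). cs n m bb cc S0f Sjf i i') $$ (i,i') = cs n m bb cc S0f Sjf i i'"
    using i i' by simp
  have "seidel_mat Ecor cv $$ (i,i') = cs n m bb cc S0f Sjf i i'"
  proof (cases "i < n")
    case True
    show ?thesis
    proof (cases "i' < n")
      case True2: True
      show ?thesis
      proof (cases "i = i'")
        case True3: True
        thus ?thesis using L True by (simp add: cs_def S0f_def seidel_idx ln)
      next
        case False3: False
        have ne: "vs0!i \<noteq> vs0!i'" using dv ln True True2 False3 by (simp add: nth_eq_iff_index_eq)
        have "card {e\<in>Ecor. cv!i \<in> e \<and> cv!i' \<in> e} = card {e\<in>E0. vs0!i \<in> e \<and> vs0!i' \<in> e}"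
          unfolding cv1[OF True] cv1[OF True2] by (rule E1[where VG=VG and EG=EG, OF dv ln hEG fVG cVG ne])
        thus ?thesis using L True True2 False3 by (simp add: cs_def S0f_def seidel_idx ln)
      qed
    next
      case False2: False
      have ni': "n \<le> i'" using False2 by simp
      define j where "j = (i'-n) div m"
      define x where "x = (i'-n) mod m"
      have j: "j < n" using jlt[OF ni' i'] by (simp add: j_def)
      have x: "x < m" using m0 by (simp add: x_def)
      have yin: "ws (j+1) ! x \<in> VG (j+1)" by (rule wsin[OF j x])
      have ji: "j+1 \<in> {1..n}" using j by simp
      have cvi': "cv!i' = Inr (j+1, 1, ws (j+1) ! x)" by (simp add: cv2[OF ni' i'] j_def x_def)
      have "card {e\<in>Ecor. cv!i \<in> e \<and> cv!i' \<in> e} = (if vs0!i = vs0!(j+1-1) then (m-1) choose (k-2) else 0)"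
        unfolding cv1[OF True] cvi' by (rule E2[where VG=VG and EG=EG, OF dv ln hEG fVG cVG ji yin hk])
      moreover have "(vs0!i = vs0!(j+1-1)) = (j = i)" using dv ln True j by (auto simp: nth_eq_iff_index_eq)
      moreover have "i \<noteq> i'" using True False2 by auto
      ultimately show ?thesis using L True False2 by (simp add: cs_def bb_def j_def)
    qed
  next
    case False
    have ni: "n \<le> i" using False by simp
    define j where "j = (i-n) div m"
    define x where "x = (i-n) mod m"
    have j: "j < n" using jlt[OF ni i] by (simp add: j_def)
    have x: "x < m" using m0 by (simp add: x_def)
    have xin: "ws (j+1) ! x \<in> VG (j+1)" by (rule wsin[OF j x])
    have ji: "j+1 \<in> {1..n}" using j by simp
    have cvi: "cv!i = Inr (j+1, 1, ws (j+1) ! x)" by (simp add: cv2[OF ni i] j_def x_def)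
    show ?thesis
    proof (cases "i' < n")
      case True2: True
      have "card {e\<in>Ecor. cv!i \<in> e \<and> cv!i' \<in> e} = card {e\<in>Ecor. cv!i' \<in> e \<and> cv!i \<in> e}"
        by (rule arg_cong[where f=card]) auto
      also have "\<dots> = (if vs0!i' = vs0!(j+1-1) then (m-1) choose (k-2) else 0)"
        unfolding cv1[OF True2] cvi by (rule E2[where VG=VG and EG=EG, OF dv ln hEG fVG cVG ji xin hk])
      finally have C: "card {e\<in>Ecor. cv!i \<in> e \<and> cv!i' \<in> e} = (if vs0!i' = vs0!(j+1-1) then (m-1) choose (k-2) else 0)" .
      moreover have "(vs0!i' = vs0!(j+1-1)) = (j = i')" using dv ln True2 j by (auto simp: nth_eq_iff_index_eq)
      moreover have "i \<noteq> i'" using False True2 by auto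
      ultimately show ?thesis using L False True2 by (simp add: cs_def bb_def j_def)
    next
      case False2: False
      have ni': "n \<le> i'" using False2 by simp
      define j' where "j' = (i'-n) div m"
      define x' where "x' = (i'-n) mod m"
      have j': "j' < n" using jlt[OF ni' i'] by (simp add: j'_def)
      have x': "x' < m" using m0 by (simp add: x'_def)
      have yin: "ws (j'+1) ! x' \<in> VG (j'+1)" by (rule wsin[OF j' x'])
      have cvi': "cv!i' = Inr (j'+1, 1, ws (j'+1) ! x')" by (simp add: cv2[OF ni' i'] j'_def x'_def)
      have ieq: "i = n + (j*m + x)" "i' = n + (j'*m + x')" using ni ni' by (simp_all add: j_def x_def j'_def x'_def)
      show ?thesis
      proof (cases "j = j'")
        case False4: False
        have "i \<noteq> i'"
        proof
          assume "i = i'" hence "j = j'" by (simp add: j_def j'_def)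
          with False4 show False by simp
        qed
        moreover have jj: "j + 1 \<noteq> j' + 1" using False4 by simp
        moreover have "card {e\<in>Ecor. cv!i \<in> e \<and> cv!i' \<in> e} = 0"
          unfolding cvi cvi' by (rule E3[where VG=VG and EG=EG, OF dv ln hEG fVG cVG jj])
        ultimately show ?thesis using L False False2 False4 by (simp add: cs_def j_def j'_def)
      next
        case True4: True
        have wp: "distinct (ws (j+1))" "length (ws (j+1)) = m" using wsprops[OF j] by auto
        show ?thesis
        proof (cases "i = i'")
          case True5: True
          have z: "Sjf j x x = 0" using x wp by (simp add: Sjf_def seidel_idx)
          have "cs n m bb cc S0f Sjf i i' = Sjf j x x" using True5 False by (simp add: cs_def j_def x_def)
          thus ?thesis using L True5 z by simp
        next
          case False5: False
          have xx: "x \<noteq> x'"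
          proof
            assume "x = x'" hence "i = i'" using ieq True4 by simp
            with False5 show False by simp
          qed
          have ne: "ws (j+1) ! x \<noteq> ws (j+1) ! x'" using wp x x' xx by (simp add: nth_eq_iff_index_eq)
          have yin': "ws (j+1) ! x' \<in> VG (j+1)" using yin True4 by simp
          have "card {e\<in>Ecor. cv!i \<in> e \<and> cv!i' \<in> e}
              = card {e\<in>EG (j+1). ws (j+1) ! x \<in> e \<and> ws (j+1) ! x' \<in> e} + (if 3 \<le> k then (m - 2) choose (k - 3) else 0)"
            unfolding cvi cvi' True4[symmetric] by (rule E4[where VG=VG and EG=EG, OF dv ln hEG fVG cVG ji xin yin' ne])
          moreover have "cc = real (if 3 \<le> k then (m - 2) choose (k - 3) else 0)"
            unfolding cc_def by (rule c_eq[OF hm hk])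
          moreover have "Sjf j x x' = 1 - 2 * real (card {e\<in>EG (j+1). ws (j+1) ! x \<in> e \<and> ws (j+1) ! x' \<in> e})"
            using wp x x' xx by (simp add: Sjf_def seidel_idx)
          moreover have "cs n m bb cc S0f Sjf i i' = Sjf j x x' - 2 * cc"
          proof -
            have "(i - n) div m = (i' - n) div m" using True4 by (simp add: j_def j'_def)
            thus ?thesis using False False2 False5 by (simp add: cs_def j_def x_def x'_def)
          qed
          ultimately show ?thesis using L False5 by simp
        qed
      qed
    qed
  qed
  thus "seidel_mat Ecor cv $$ (i,i') = mat (n + n*m) (n + n*m) (\<lambda>(i,i'). cs n m bb cc S0f Sjf i i') $$ (i,i')"
    using R by simp
qed (auto simp: cv_len)

end


lemma key_alg:
  fixes h m n a b d s \<nu> \<mu> v1 :: real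
  assumes h0: "h \<noteq> 0" and hmn: "h + m * n \<noteq> 0"
    and ddef: "d = 2*b/h" and adef: "a = -(1 + m*d)/(h + m * n)"
    and sdef: "s = m * (n * a - 2*a*b + d)" and nudef: "\<nu> = \<mu> + 2*b*d*m"
  shows "(v1 - \<nu> + s * n) * (h + m * n) = (v1 - \<mu>) * (h + m * n) + 4*b*m*(n - b) - m * n^2"
proof -
  have ah: "a * (h + m * n) = -(1 + m*d)" using hmn adef by (simp add: field_simps)
  have dh: "d * h = 2*b" using h0 ddef by (simp add: field_simps)
  have "(v1 - \<nu> + s * n) * (h + m * n) = (v1 - \<mu>) * (h + m * n) - 2*b*m*(d*h) - 2*b*d*m*m*n
       + m*n*((n - 2*b) * (a * (h + m*n)) + (d*h) + d*m*n)"
    by (simp add: sdef nudef algebra_simps)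
  also have "\<dots> = (v1 - \<mu>) * (h + m * n) + 4*b*m*(n - b) - m * n^2"
    unfolding ah dh by (simp add: algebra_simps power2_eq_square)
  finally show ?thesis .
qed

lemma charP_cont: "continuous (at t) (charP M)"
proof -
  define n where "n = dim_row M"
  have eq: "charP M = (\<lambda>\<mu>. \<Sum>p\<in>{p. p permutes {0..<n}}. signof p * (\<Prod>i=0..<n. M $$ (i, p i) - \<mu> * (if i = p i then 1 else 0)))"
  proof (rule ext)
    fix \<mu> :: real
    have c: "M - \<mu> \<cdot>\<^sub>m 1\<^sub>m n \<in> carrier_mat n n" by (rule carrier_matI) auto
    have pr: "(\<Prod>i=0..<n. (M - \<mu> \<cdot>\<^sub>m 1\<^sub>m n) $$ (i, p i)) = (\<Prod>i=0..<n. M $$ (i, p i) - \<mu> * (if i = p i then 1 else 0))"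
      if p: "p permutes {0..<n}" for p
    proof (rule prod.cong[OF refl])
      fix i assume i: "i \<in> {0..<n}"
      hence "p i \<in> {0..<n}" using p by (simp add: permutes_in_image)
      thus "(M - \<mu> \<cdot>\<^sub>m 1\<^sub>m n) $$ (i, p i) = M $$ (i, p i) - \<mu> * (if i = p i then 1 else 0)"
        using i by auto
    qed
    show "charP M \<mu> = (\<Sum>p\<in>{p. p permutes {0..<n}}. signof p * (\<Prod>i=0..<n. M $$ (i, p i) - \<mu> * (if i = p i then 1 else 0)))"
      unfolding charP_def n_def[symmetric] det_def'[OF c] using pr by (intro sum.cong refl) auto
  qed
  show ?thesis unfolding eq by (intro continuous_intros)
qed

lemma cont_ext:
  fixes f g :: "real \<Rightarrow> real"
  assumes f: "continuous (at x) f" and g: "continuous (at x) g" and S: "finite S"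
    and eq: "\<And>y. y \<notin> S \<Longrightarrow> f y = g y"
  shows "f x = g x"
proof -
  have "\<forall>s\<in>S. eventually (\<lambda>y. y \<noteq> s) (at x)" by (simp add: eventually_neq_at_within)
  hence ev: "eventually (\<lambda>y. \<forall>s\<in>S. y \<noteq> s) (at x)" by (rule eventually_ball_finite[OF S])
  have ev2: "eventually (\<lambda>y. g y = f y) (at x)" using ev by eventually_elim (use eq in auto)
  have "(f \<longlongrightarrow> f x) (at x)" using f by (simp add: continuous_at)
  moreover have "(g \<longlongrightarrow> g x) (at x)" using g by (simp add: continuous_at)
  hence "(f \<longlongrightarrow> g x) (at x)" using ev2 by (rule Lim_transform_eventually)
  ultimately show ?thesis by (rule LIM_unique)
qed

lemma finite_lin: "finite {y::real. C - y = 0}"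
  by (rule finite_subset[of _ "{C}"]) auto

lemma finite_quad: "finite {y::real. (p - y) * (q - y) - r = 0}"
proof -
  have eq: "{y::real. (p - y) * (q - y) - r = 0} = {y. poly [:p*q - r, -(p+q), 1:] y = 0}"
    by (auto simp: algebra_simps)
  show ?thesis unfolding eq by (rule poly_roots_finite) simp
qed

lemma prod_split1: "1 \<le> n \<Longrightarrow> prod g {1..n} = g 1 * prod g {2..(n::nat)}"
proof -
  assume "1 \<le> n"
  hence "{1..n} = insert 1 {2..n}" by auto
  thus ?thesis by simp
qed

lemma final_alg:
  fixes X hh v1 \<nu> s nn mm \<beta> D0 Q0 P2 :: real and Dj Qj :: "nat \<Rightarrow> real"
  assumes n1: "1 \<le> n" and h0: "hh \<noteq> 0" and v: "v1 - \<nu> \<noteq> 0" and bt: "\<beta> \<noteq> 0"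
    and dP0: "D0 = (v1 - \<nu>) * Q0" and dPj: "\<And>j. j < n \<Longrightarrow> Dj j = \<beta> * Qj j"
    and X: "X = (v1 - \<nu> + s * nn) * (hh + mm * nn)"
    and P2: "P2 = hh^(n-1) * Q0"
  shows "D0 * (v1 - \<nu> + s * nn) / (v1 - \<nu>) * ((hh + mm * nn) / hh) * (\<Prod>j<n. Dj j * hh / \<beta>)
     = X * P2 * (\<Prod>j<n. Qj j)"
proof -
  have "(\<Prod>j<n. Dj j * hh / \<beta>) = (\<Prod>j<n. hh * Qj j)"
    using dPj bt by (intro prod.cong refl) auto
  also have "\<dots> = hh^n * (\<Prod>j<n. Qj j)" by (simp add: prod.distrib)
  finally have pr: "(\<Prod>j<n. Dj j * hh / \<beta>) = hh^n * (\<Prod>j<n. Qj j)" .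
  obtain n' where n': "n = Suc n'" using n1 by (cases n) auto
  show ?thesis unfolding pr dP0 X P2 using v h0 n' by (simp add: field_simps)
qed

theorem theorem3p4:
  fixes k r0 r n m :: nat
    and V0 :: "'a set" and E0 :: "'a set set" and vs0 :: "'a list"
    and VG :: "nat \<Rightarrow> 'b set" and EG :: "nat \<Rightarrow> 'b set set" and ws :: "nat \<Rightarrow> 'b list"
    and mu0 :: "nat \<Rightarrow> real" and mu :: "nat \<Rightarrow> nat \<Rightarrow> real"
    and zs :: "('a + nat \<times> nat \<times> 'b) list"
  assumes hk: "k \<ge> 2"
    and hn: "n \<ge> 1"
    and hm: "m \<ge> 2"
    and G0: "kr_regular k r0 V0 E0"
    and vs0: "distinct vs0" "set vs0 = V0" "length vs0 = n"
    and mu0_1: "mu0 1 = real n - 1 - 2 * real r0 * (real k - 1)"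
    and mu0_eig: "\<forall>\<mu>. charP (seidel_mat E0 vs0) \<mu> = (\<Prod>i=1..n. mu0 i - \<mu>)"
    and Gj: "\<forall>j\<in>{1..n}. kr_regular k r (VG j) (EG j)"
    and ws: "\<forall>j\<in>{1..n}. distinct (ws j) \<and> set (ws j) = VG j \<and> length (ws j) = m"
    and mu_1: "\<forall>j\<in>{1..n}. mu j 1 = real m - 1 - 2 * real r * (real k - 1)"
    and mu_eig: "\<forall>j\<in>{1..n}. \<forall>\<mu>. charP (seidel_mat (EG j) (ws j)) \<mu> = (\<Prod>i=1..m. mu j i - \<mu>)"
    and zs: "distinct zs" "set zs = gen_corona_V V0 n 1 VG"
  shows "\<forall>\<mu>::real.
    (let b = real ((m - 1) choose (k - 2));
         c = real ((m - 1) choose (k - 2)) - real ((m - 2) choose (k - 2));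
         h = - (1 + 2 * real r * (real k - 1) + 2 * c * (real m - 1) + \<mu>)
     in charP (seidel_mat (gen_corona_E k E0 n 1 (\<lambda>i. {vs0 ! (i - 1)}) VG EG) zs) \<mu>
        = ((mu0 1 - \<mu>) * (h + real m * real n) + 4 * b * real m * (real n - b)
             - real m * (real n)^2)
          * (\<Prod>i=2..n. mu0 i * h - 4 * real m * b^2 - \<mu> * h)
          * (\<Prod>j=1..n. \<Prod>i=2..m. mu j i + 2 * c - \<mu>))"
proof -
  note Eprem = hk hm vs0(1) vs0(2) vs0(3) Gj ws
  have m0: "0 < m" using hm by simp
  show ?thesis
  proof (intro allI)
    fix t :: real
    define b where "b = real ((m - 1) choose (k - 2))"
    define c where "c = real ((m - 1) choose (k - 2)) - real ((m - 2) choose (k - 2))"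
    define v1 where "v1 = mu0 1"
    define w where "w = real m - 1 - 2 * real r * (real k - 1)"
    define C0 where "C0 = w - 2*c*(real m - 1) - real m"
    define hs where "hs = (\<lambda>y::real. - (1 + 2 * real r * (real k - 1) + 2 * c * (real m - 1) + y))"
    have hsC: "\<And>y. hs y = C0 - y" by (simp add: hs_def C0_def w_def algebra_simps)
    define Ec where "Ec = gen_corona_E k E0 n 1 (\<lambda>i. {vs0 ! (i - 1)}) VG EG"
    define FF where "FF = charP (seidel_mat Ec zs)"
    define GG where "GG = (\<lambda>y. ((mu0 1 - y) * (hs y + real m * real n) + 4 * b * real m * (real n - b)
             - real m * (real n)^2)
          * (\<Prod>i=2..n. mu0 i * hs y - 4 * real m * b^2 - y * hs y)
          * (\<Prod>j=1..n. \<Prod>i=2..m. mu j i + 2 * c - y))"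
    define S where "S = {y::real. C0 - y = 0} \<union> {y. (C0 + real m * real n) - y = 0} \<union> {y. (w + 2*c) - y = 0}
       \<union> {y. (v1 - y) * (C0 - y) - 4*b^2*real m = 0}"
    have fS: "finite S" unfolding S_def using finite_lin finite_quad by auto
    have rs0: "\<And>i. i < n \<Longrightarrow> (\<Sum>i'<n. S0f E0 vs0 i i') = v1"
    proof -
      fix i assume i: "i < n"
      have "(\<Sum>j<length vs0. seidel_mat E0 vs0 $$ (i,j)) = real (length vs0) - 1 - 2 * real r0 * (real k - 1)"
        by (rule reg_rowsum[OF G0 vs0(1) vs0(2)]) (use i vs0(3) in simp)
      thus "(\<Sum>i'<n. S0f E0 vs0 i i') = v1" using vs0(3) mu0_1 by (simp add: S0f_def[OF Eprem] v1_def)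
    qed
    have rsj: "\<And>j x. j < n \<Longrightarrow> x < m \<Longrightarrow> (\<Sum>y<m. Sjf EG ws j x y) = w"
    proof -
      fix j x assume j: "j < n" and x: "x < m"
      have jj: "j+1 \<in> {1..n}" using j by simp
      have wj: "distinct (ws (j+1))" "set (ws (j+1)) = VG (j+1)" "length (ws (j+1)) = m" using ws jj by auto
      have "(\<Sum>y<length (ws (j+1)). seidel_mat (EG (j+1)) (ws (j+1)) $$ (x,y)) = real (length (ws (j+1))) - 1 - 2 * real r * (real k - 1)"
        by (rule reg_rowsum[OF _ wj(1) wj(2)]) (use Gj jj x wj(3) in auto)
      thus "(\<Sum>y<m. Sjf EG ws j x y) = w" using wj(3) by (simp add: Sjf_def[OF Eprem] w_def)
    qed
    have bbE: "bb k m = b" and ccE: "cc k m = c" using bb_def[OF Eprem] cc_def[OF Eprem] by (simp_all add: b_def c_def)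
    have SC: "seidel_mat Ec (cv n m vs0 ws) = mat (n + n*m) (n + n*m) (\<lambda>(i,i'). cs n m b c (S0f E0 vs0) (Sjf EG ws) i i')"
      using seid_cor[OF Eprem] unfolding bbE ccE Ec_def .
    have Qj: "(\<Prod>j=1..n. \<Prod>i=2..m. mu j i + 2 * c - y) = (\<Prod>j<n. \<Prod>i=2..m. mu (Suc j) i + 2*c - y)" for y
      using prod.atLeast1_atMost_eq[of "\<lambda>j. \<Prod>i=2..m. mu j i + 2 * c - y" n] by simp
    have key: "FF y = GG y" if yS: "y \<notin> S" for y
    proof -
      define hh where "hh = C0 - y"
      define d where "d = 2*b/hh"
      define a where "a = -(1 + real m*d)/(hh + real m * real n)"
      define s where "s = real m * (real n * a - 2*a*b + d)"
      define \<nu> where "\<nu> = y + 2*b*d*real m"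
      have hdef: "hh = w - 2*c*(real m - 1) - y - real m" by (simp add: hh_def C0_def)
      have h0: "hh \<noteq> 0" using yS by (auto simp: S_def hh_def)
      have hmn: "hh + real m * real n \<noteq> 0" using yS by (auto simp: S_def hh_def algebra_simps)
      have bt: "w - y + 2*c \<noteq> 0" using yS by (auto simp: S_def algebra_simps)
      have hnu: "hh * \<nu> = hh * y + 4 * b^2 * real m" using h0 by (simp add: \<nu>_def d_def field_simps power2_eq_square)
      have v: "v1 - \<nu> \<noteq> 0"
      proof
        assume v0: "v1 - \<nu> = 0"
        have "(v1 - y) * (C0 - y) - 4*b^2*real m = hh * v1 - (hh * y + 4*b^2*real m)" by (simp add: hh_def algebra_simps)
        also have "\<dots> = hh * v1 - hh * \<nu>" unfolding hnu ..
        also have "\<dots> = hh * (v1 - \<nu>)" by (simp add: algebra_simps)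
        also have "\<dots> = 0" using v0 by simp
        finally show False using yS by (auto simp: S_def)
      qed
      note AF = alg_final[OF m0 rs0 rsj hdef h0 hmn d_def a_def s_def \<nu>_def v bt]
      have DF: "\<And>i i'. Df n m b c y (S0f E0 vs0) (Sjf EG ws) i i' = cs n m b c (S0f E0 vs0) (Sjf EG ws) i i' - (if i = i' then y else 0)"
        by (rule Df_def[OF m0 rs0 rsj hdef h0 hmn d_def a_def s_def \<nu>_def])
      have M: "seidel_mat Ec (cv n m vs0 ws) - y \<cdot>\<^sub>m 1\<^sub>m (n + n*m) = mat (n + n*m) (n + n*m) (\<lambda>(x,y'). Df n m b c y (S0f E0 vs0) (Sjf EG ws) x y')"
        unfolding SC by (rule eq_matI) (auto simp: DF)
      have F1: "FF y = det (mat (n + n*m) (n + n*m) (\<lambda>(x,y'). Df n m b c y (S0f E0 vs0) (Sjf EG ws) x y'))"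
      proof -
        have "FF y = charP (seidel_mat Ec (cv n m vs0 ws)) y"
          unfolding FF_def by (rule charP_perm) (use cv_distinct[OF Eprem] zs cv_set[OF Eprem] in auto)
        also have "\<dots> = det (seidel_mat Ec (cv n m vs0 ws) - y \<cdot>\<^sub>m 1\<^sub>m (n + n*m))"
          by (simp add: charP_def cv_len[OF Eprem])
        also have "\<dots> = det (mat (n + n*m) (n + n*m) (\<lambda>(x,y'). Df n m b c y (S0f E0 vs0) (Sjf EG ws) x y'))"
          unfolding M ..
        finally show ?thesis .
      qed
      have D0: "det (mat n n (\<lambda>(i,i'). S0f E0 vs0 i i' - (if i = i' then \<nu> else 0))) = (v1 - \<nu>) * (\<Prod>i=2..n. mu0 i - \<nu>)"
      proof -
        have "mat n n (\<lambda>(i,i'). S0f E0 vs0 i i' - (if i = i' then \<nu> else 0)) = seidel_mat E0 vs0 - \<nu> \<cdot>\<^sub>m 1\<^sub>m n"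
          by (rule eq_matI) (auto simp: S0f_def[OF Eprem] vs0(3))
        hence "det (mat n n (\<lambda>(i,i'). S0f E0 vs0 i i' - (if i = i' then \<nu> else 0))) = charP (seidel_mat E0 vs0) \<nu>"
          by (simp add: charP_def vs0(3))
        also have "\<dots> = (\<Prod>i=1..n. mu0 i - \<nu>)" using mu0_eig by simp
        also have "\<dots> = (v1 - \<nu>) * (\<Prod>i=2..n. mu0 i - \<nu>)" unfolding prod_split1[OF hn] v1_def ..
        finally show ?thesis .
      qed
      have DJ: "det (mat m m (\<lambda>(x,y'). Sjf EG ws j x y' - (if x = y' then y - 2*c else 0))) = (w - y + 2*c) * (\<Prod>i=2..m. mu (Suc j) i + 2*c - y)"
        if j: "j < n" for j
      proof -
        have jj: "j+1 \<in> {1..n}" using j by simp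
        have lw: "length (ws (j+1)) = m" "length (ws (Suc j)) = m" using ws jj by auto
        have "mat m m (\<lambda>(x,y'). Sjf EG ws j x y' - (if x = y' then y - 2*c else 0)) = seidel_mat (EG (j+1)) (ws (j+1)) - (y - 2*c) \<cdot>\<^sub>m 1\<^sub>m m"
          by (rule eq_matI) (auto simp: Sjf_def[OF Eprem] lw)
        hence "det (mat m m (\<lambda>(x,y'). Sjf EG ws j x y' - (if x = y' then y - 2*c else 0))) = charP (seidel_mat (EG (j+1)) (ws (j+1))) (y - 2*c)"
          by (simp add: charP_def lw)
        also have "\<dots> = (\<Prod>i=1..m. mu (j+1) i - (y - 2*c))" using mu_eig jj by simp
        also have "\<dots> = (mu (j+1) 1 - (y - 2*c)) * (\<Prod>i=2..m. mu (j+1) i - (y - 2*c))" using hm by (intro prod_split1) simp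
        also have "mu (j+1) 1 = w" using mu_1 jj by (simp add: w_def)
        finally have e: "det (mat m m (\<lambda>(x,y'). Sjf EG ws j x y' - (if x = y' then y - 2*c else 0))) = (w - (y - 2*c)) * (\<Prod>i=2..m. mu (j+1) i - (y - 2*c))" .
        have "(\<Prod>i=2..m. mu (j+1) i - (y - 2*c)) = (\<Prod>i=2..m. mu (Suc j) i + 2*c - y)"
          by (intro prod.cong refl) (simp add: algebra_simps)
        thus ?thesis using e by (simp add: algebra_simps)
      qed
      have X: "((mu0 1 - y) * (hs y + real m * real n) + 4 * b * real m * (real n - b) - real m * (real n)^2) = (v1 - \<nu> + s * real n) * (hh + real m * real n)"
        using key_alg[OF h0 hmn d_def a_def s_def \<nu>_def, of v1] hsC by (simp add: v1_def hh_def)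
      have e1: "z * hs y - 4 * real m * b^2 - y * hs y = hh * (z - \<nu>)" for z
      proof -
        have "hh * (z - \<nu>) = hh * z - hh * \<nu>" by (simp add: right_diff_distrib)
        also have "\<dots> = hh * z - (hh * y + 4 * b^2 * real m)" unfolding hnu ..
        finally have "hh * (z - \<nu>) = hh * z - (hh * y + 4 * b^2 * real m)" .
        thus ?thesis unfolding hsC hh_def by (simp add: algebra_simps)
      qed
      have P2: "(\<Prod>i=2..n. mu0 i * hs y - 4 * real m * b^2 - y * hs y) = hh^(n-1) * (\<Prod>i=2..n. mu0 i - \<nu>)"
      proof -
        have "(\<Prod>i=2..n. mu0 i * hs y - 4 * real m * b^2 - y * hs y) = (\<Prod>i=2..n. hh * (mu0 i - \<nu>))"
          by (intro prod.cong refl) (rule e1)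
        also have "\<dots> = hh^(card {2..n}) * (\<Prod>i=2..n. mu0 i - \<nu>)" by (simp add: prod.distrib)
        finally show ?thesis by simp
      qed
      have "FF y = det (mat n n (\<lambda>(i,i'). S0f E0 vs0 i i' - (if i = i' then \<nu> else 0))) * (v1 - \<nu> + s * real n) / (v1 - \<nu>)
          * ((hh + real m * real n) / hh)
          * (\<Prod>j<n. det (mat m m (\<lambda>(x,y'). Sjf EG ws j x y' - (if x = y' then y - 2*c else 0))) * hh / (w - y + 2*c))"
        using F1 AF by simp
      also have "\<dots> = ((mu0 1 - y) * (hs y + real m * real n) + 4 * b * real m * (real n - b) - real m * (real n)^2)
          * (\<Prod>i=2..n. mu0 i * hs y - 4 * real m * b^2 - y * hs y)
          * (\<Prod>j<n. \<Prod>i=2..m. mu (Suc j) i + 2*c - y)"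
        by (rule final_alg[OF hn h0 v bt D0 DJ X P2])
      also have "\<dots> = GG y" unfolding GG_def Qj by simp
      finally show ?thesis .
    qed
    have cF: "continuous (at t) FF" unfolding FF_def by (rule charP_cont)
    have cG: "continuous (at t) GG" unfolding GG_def hs_def by (intro continuous_intros)
    have "FF t = GG t" by (rule cont_ext[OF cF cG fS key])
    thus "let b = real ((m - 1) choose (k - 2));
         c = real ((m - 1) choose (k - 2)) - real ((m - 2) choose (k - 2));
         h = - (1 + 2 * real r * (real k - 1) + 2 * c * (real m - 1) + t)
     in charP (seidel_mat (gen_corona_E k E0 n 1 (\<lambda>i. {vs0 ! (i - 1)}) VG EG) zs) t
        = ((mu0 1 - t) * (h + real m * real n) + 4 * b * real m * (real n - b)
             - real m * (real n)^2)
          * (\<Prod>i=2..n. mu0 i * h - 4 * real m * b^2 - t * h)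
          * (\<Prod>j=1..n. \<Prod>i=2..m. mu j i + 2 * c - t)"
      unfolding Let_def FF_def GG_def hs_def b_def c_def Ec_def by simp
  qed
qed


end
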